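(* Consider an instance of \textsc{MaxToll} and let $P_0$ be a shortest $s$–$t$ path when all tolls are zero, of length $\mathcal{L}_0$, and assume $P_0$ contains $m_T^{P_0}\ge1$ toll arcs. Let $APP$ be the revenue returned by \textsc{ExploreDescendants}$(P_0)$. Then $$APP\ \ge\ \frac{1}{\alpha(m_T^{P_0})}\,LP\ \ge\ \frac{1}{\alpha(m_T)}\,OPT,$$ where $LP=\mathcal{L}_\infty-\mathcal{L}_0$ and $OPT$ is the optimal value of the instance.
   Context: \textsc{MaxToll}: a directed multigraph $G=(V,A)$ with $A=A_T\cup A_U$ partitioned into toll arcs ($|A_T|=m_T$) and toll-free arcs, fixed costs $c:A_T\to\mathbf{N}$, $d:A_U\to\mathbf{N}$, vertices $s,t$ with an $s$–$t$ path using only toll-free arcs. Under a nonnegative toll vector $T$ a toll arc $e$ costs $c(e)+T(e)$ and a toll-free arc costs $d(e)$; path length is the sum of arc costs. $OPT$ is the maximum of $\sum_{e\in A_T\cap P}T(e)$ over nonnegative $T$ and simple $s$–$t$ paths $P$ that are shortest under $T$. $\mathcal{L}_\infty$ is the length of a shortest toll-free $s$–$t$ path; for a path $P$, $\mathcal{L}(P)$ is its length with zero tolls and $B(P)=\mathcal{L}_\infty-\mathcal{L}(P)$. $\mathcal{N}_T(P)$ is the network with toll arcs not on $P$ deleted. An $s$–$t$ path $P$ is valid if it has $m_T^P\ge1$ toll arcs and is a shortest $s$–$t$ path in $\mathcal{N}_0(P)$. For a path $P$ with toll arcs $\tau_1,\dots,\tau_m$ in traversal order, set $\mathrm{TERM}(\tau_0)=s$,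 $\mathrm{INIT}(\tau_{m+1})=t$; $\mathcal{U}_{i,j}$ is the length of a shortest toll-free path $\upsilon_{i,j}$ from $\mathrm{TERM}(\tau_i)$ to $\mathrm{INIT}(\tau_j)$ ($+\infty$ if none), and $\mathcal{L}_{k,l}=\sum_{i=k}^{l-1}\mathcal{U}_{i,i+1}+\sum_{i=k+1}^{l-1}c(\tau_i)$. Define $\alpha(1)=1$, and for $k\ge2$, $\alpha(k)=\frac12\max\{1+\alpha(i)+\alpha(j):0<i\le j<k,\ i+j\le k\}$. \textsc{MaxRev}$(P)$: set $k:=1$; while $k<m+1$: compute $t_k=\min_{0\le i<k<j\le m+1}\{\mathcal{U}_{i,j}-\mathcal{L}_{i,j}-\sum_{l=i+1}^{k-1}t_l\}$, let $(i'(k),j'(k))$ be the minimizing pair (ties: largest $j$, then smallest $i$), set $t_l:=0$ and $(i'(l),j'(l)):=(i'(k),j'(k))$ for $k<l<j'(k)$, and set $k:=j'(k)$. Output tolls $T_P(\tau_k)=t_k$ ($+\infty$ on toll arcs off $P$), revenue $V_P=\sum_k t_k$ and the pairs $(i'(k),j'(k))$. \textsc{TollPartition}$(P)$: starting from $l:=m$, repeatedly record $(i'(l),j'(l))$ and set $l:=i'(l)$ until $l=0$; list the $q$ recorded pairs in reverse order as $(i(1),j(1)),\dots,(i(q),j(q))$. $P_1$ uses $\upsilon_{i(h),j(h)}$ for odd $h$ and follows $P$ in between (and before the first/after the last); $P_2$ likewise with even $h$. \textsc{ExploreDescendants}$(P)$: compute $(V_P,T_P)$ by \textsc{MaxRev}$(P)$;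 if $V_P<B(P)$, compute $(P_1,P_2)$ by \textsc{TollPartition}$(P)$, run \textsc{ExploreDescendants} recursively on $P_1$ and $P_2$, and return the best (largest revenue) among $V_P$ and the two recursive results, together with its tolls and path; otherwise return $(V_P,T_P,P)$. *)

theory Defs
  imports "HOL-Analysis.Analysis"
begin

text \<open>A directed multigraph given by arc identifiers of type 'e with tail/head maps;
 toll arcs tollA (costs c), toll-free arcs freeA (costs d), source src, sink snk.\<close>

record ('v,'e) tollnet =
  arc_tail :: "'e \<Rightarrow> 'v"
  arc_head :: "'e \<Rightarrow> 'v"
  tollA :: "'e set"
  freeA :: "'e set"
  c :: "'e \<Rightarrow> nat"
  d :: "'e \<Rightarrow> nat"
  src :: 'v
  snk :: 'v

definition allA :: "('v,'e) tollnet \<Rightarrow> 'e set" where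
  "allA G = tollA G \<union> freeA G"

fun walk :: "('v,'e) tollnet \<Rightarrow> 'v \<Rightarrow> 'e list \<Rightarrow> 'v \<Rightarrow> bool" where
  "walk G u [] v = (u = v)"
| "walk G u (e # es) v = (arc_tail G e = u \<and> walk G (arc_head G e) es v)"

definition spath :: "('v,'e) tollnet \<Rightarrow> 'e set \<Rightarrow> 'v \<Rightarrow> 'e list \<Rightarrow> 'v \<Rightarrow> bool" where
  "spath G S u P v \<longleftrightarrow> walk G u P v \<and> distinct (u # map (arc_head G) P) \<and> set P \<subseteq> S"

definition maxtoll_instance :: "('v,'e) tollnet \<Rightarrow> bool" where
  "maxtoll_instance G \<longleftrightarrow> finite (tollA G) \<and> finite (freeA G) \<and> tollA G \<inter> freeA G = {}
     \<and> (\<exists>Q. spath G (freeA G) (src G) Q (snk G))"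

definition arc_cost :: "('v,'e) tollnet \<Rightarrow> ('e \<Rightarrow> real) \<Rightarrow> 'e \<Rightarrow> real" where
  "arc_cost G T e = (if e \<in> tollA G then real (c G e) + T e else real (d G e))"

definition plen :: "('v,'e) tollnet \<Rightarrow> ('e \<Rightarrow> real) \<Rightarrow> 'e list \<Rightarrow> real" where
  "plen G T P = sum_list (map (arc_cost G T) P)"

definition L0 :: "('v,'e) tollnet \<Rightarrow> 'e list \<Rightarrow> real" where
  "L0 G P = plen G (\<lambda>_. 0) P"

definition revenue :: "('v,'e) tollnet \<Rightarrow> ('e \<Rightarrow> real) \<Rightarrow> 'e list \<Rightarrow> real" where
  "revenue G T P = sum_list (map (\<lambda>e. if e \<in> tollA G then T e else 0) P)"

definition shortest_stpath :: "('v,'e) tollnet \<Rightarrow> ('e \<Rightarrow> real) \<Rightarrow> 'e set \<Rightarrow> 'e list \<Rightarrow> bool" where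
  "shortest_stpath G T S P \<longleftrightarrow> spath G S (src G) P (snk G) \<and>
     (\<forall>Q. spath G S (src G) Q (snk G) \<longrightarrow> plen G T P \<le> plen G T Q)"

text \<open>OPT: supremum (indeed maximum) of the revenue over nonnegative tolls and
 simple s-t paths that are shortest under these tolls\<close>
definition OPT :: "('v,'e) tollnet \<Rightarrow> real" where
  "OPT G = Sup {revenue G T P | T P. (\<forall>e\<in>tollA G. 0 \<le> T e) \<and> shortest_stpath G T (allA G) P}"

text \<open>shortest toll-free path length from u to v (+\<infinity> if none)\<close>
definition Ufree :: "('v,'e) tollnet \<Rightarrow> 'v \<Rightarrow> 'v \<Rightarrow> ereal" where
  "Ufree G u v = Inf (ereal ` {L0 G Q | Q. spath G (freeA G) u Q v})"

definition Linf :: "('v,'e) tollnet \<Rightarrow> real" where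
  "Linf G = real_of_ereal (Ufree G (src G) (snk G))"

definition Bval :: "('v,'e) tollnet \<Rightarrow> 'e list \<Rightarrow> real" where
  "Bval G P = Linf G - L0 G P"

definition tpos :: "('v,'e) tollnet \<Rightarrow> 'e list \<Rightarrow> nat list" where
  "tpos G P = filter (\<lambda>n. P ! n \<in> tollA G) [0..<length P]"

definition ntoll :: "('v,'e) tollnet \<Rightarrow> 'e list \<Rightarrow> nat" where
  "ntoll G P = length (tpos G P)"

text \<open>\<tau>_k for 1 \<le> k \<le> m\<close>
definition tau :: "('v,'e) tollnet \<Rightarrow> 'e list \<Rightarrow> nat \<Rightarrow> 'e" where
  "tau G P k = P ! (tpos G P ! (k - 1))"

definition TERMv :: "('v,'e) tollnet \<Rightarrow> 'e list \<Rightarrow> nat \<Rightarrow> 'v" where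
  "TERMv G P i = (if i = 0 then src G else arc_head G (tau G P i))"

definition INITv :: "('v,'e) tollnet \<Rightarrow> 'e list \<Rightarrow> nat \<Rightarrow> 'v" where
  "INITv G P j = (if j = ntoll G P + 1 then snk G else arc_tail G (tau G P j))"

definition Uij :: "('v,'e) tollnet \<Rightarrow> 'e list \<Rightarrow> nat \<Rightarrow> nat \<Rightarrow> ereal" where
  "Uij G P i j = Ufree G (TERMv G P i) (INITv G P j)"

definition Lij :: "('v,'e) tollnet \<Rightarrow> 'e list \<Rightarrow> nat \<Rightarrow> nat \<Rightarrow> ereal" where
  "Lij G P k l = (\<Sum>i\<in>{k..<l}. Uij G P i (i + 1)) + ereal (\<Sum>i\<in>{k+1..<l}. real (c G (tau G P i)))"

definition mr_pairs :: "('v,'e) tollnet \<Rightarrow> 'e list \<Rightarrow> nat \<Rightarrow> (nat \<times> nat) set" where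
  "mr_pairs G P k = {(i, j). i < k \<and> k < j \<and> j \<le> ntoll G P + 1}"

definition mr_obj :: "('v,'e) tollnet \<Rightarrow> 'e list \<Rightarrow> (nat \<Rightarrow> real) \<Rightarrow> nat \<Rightarrow> nat \<times> nat \<Rightarrow> ereal" where
  "mr_obj G P t k ij = (case ij of (i, j) \<Rightarrow>
     Uij G P i j - Lij G P i j - ereal (\<Sum>l\<in>{i+1..<k}. t l))"

definition mr_min :: "('v,'e) tollnet \<Rightarrow> 'e list \<Rightarrow> (nat \<Rightarrow> real) \<Rightarrow> nat \<Rightarrow> ereal" where
  "mr_min G P t k = Min (mr_obj G P t k ` mr_pairs G P k)"

definition mr_j :: "('v,'e) tollnet \<Rightarrow> 'e list \<Rightarrow> (nat \<Rightarrow> real) \<Rightarrow> nat \<Rightarrow> nat" where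
  "mr_j G P t k = Max {j. \<exists>i. (i, j) \<in> mr_pairs G P k \<and> mr_obj G P t k (i, j) = mr_min G P t k}"

definition mr_i :: "('v,'e) tollnet \<Rightarrow> 'e list \<Rightarrow> (nat \<Rightarrow> real) \<Rightarrow> nat \<Rightarrow> nat" where
  "mr_i G P t k = Min {i. (i, mr_j G P t k) \<in> mr_pairs G P k
                       \<and> mr_obj G P t k (i, mr_j G P t k) = mr_min G P t k}"

text \<open>The while loop of MaxRev, run with a fuel counter; since k strictly increases,
 fuel m+1 is enough for the loop to terminate normally.\<close>
fun mr_loop :: "('v,'e) tollnet \<Rightarrow> 'e list \<Rightarrow> nat \<Rightarrow> nat \<Rightarrow> (nat \<Rightarrow> real) \<Rightarrow> (nat \<Rightarrow> nat \<times> nat)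
                 \<Rightarrow> (nat \<Rightarrow> real) \<times> (nat \<Rightarrow> nat \<times> nat)" where
  "mr_loop G P 0 k t pr = (t, pr)"
| "mr_loop G P (Suc n) k t pr =
     (if k < ntoll G P + 1 then
        (let tk = real_of_ereal (mr_min G P t k);
             j' = mr_j G P t k;
             i' = mr_i G P t k;
             t' = (\<lambda>l. if l = k then tk else if k < l \<and> l < j' then 0 else t l);
             pr' = (\<lambda>l. if k \<le> l \<and> l < j' then (i', j') else pr l)
         in mr_loop G P n j' t' pr')
      else (t, pr))"

definition maxrev :: "('v,'e) tollnet \<Rightarrow> 'e list \<Rightarrow> (nat \<Rightarrow> real) \<times> (nat \<Rightarrow> nat \<times> nat)" where
  "maxrev G P = mr_loop G P (ntoll G P + 1) 1 (\<lambda>_. 0) (\<lambda>_. (0, 0))"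

definition VP :: "('v,'e) tollnet \<Rightarrow> 'e list \<Rightarrow> real" where
  "VP G P = (\<Sum>k\<in>{1..ntoll G P}. fst (maxrev G P) k)"

fun tp_rec :: "(nat \<Rightarrow> nat \<times> nat) \<Rightarrow> nat \<Rightarrow> nat \<Rightarrow> (nat \<times> nat) list" where
  "tp_rec pr 0 l = []"
| "tp_rec pr (Suc n) l = (if l = 0 then [] else pr l # tp_rec pr n (fst (pr l)))"

text \<open>the pairs (i(1),j(1)),...,(i(q),j(q)); i'(l) < l, so fuel m+1 suffices\<close>
definition tp_pairs :: "('v,'e) tollnet \<Rightarrow> 'e list \<Rightarrow> (nat \<times> nat) list" where
  "tp_pairs G P = rev (tp_rec (snd (maxrev G P)) (ntoll G P + 1) (ntoll G P))"

text \<open>index in P of the first arc after \<tau>_a (a = 0: start), index of \<tau>_b (b = m+1: end)\<close>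
definition aft :: "('v,'e) tollnet \<Rightarrow> 'e list \<Rightarrow> nat \<Rightarrow> nat" where
  "aft G P a = (if a = 0 then 0 else tpos G P ! (a - 1) + 1)"

definition bef :: "('v,'e) tollnet \<Rightarrow> 'e list \<Rightarrow> nat \<Rightarrow> nat" where
  "bef G P b = (if b = ntoll G P + 1 then length P else tpos G P ! (b - 1))"

text \<open>ups u v is the chosen shortest toll-free path \<upsilon> from u to v\<close>
fun buildp :: "('v,'e) tollnet \<Rightarrow> ('v \<Rightarrow> 'v \<Rightarrow> 'e list) \<Rightarrow> 'e list \<Rightarrow> (nat \<times> nat) list \<Rightarrow> nat \<Rightarrow> 'e list" where
  "buildp G ups P [] cur = drop cur P"
| "buildp G ups P ((a, b) # rest) cur =
     drop cur (take (aft G P a) P) @ ups (TERMv G P a) (INITv G P b) @ buildp G ups P rest (bef G P b)"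

definition P1 :: "('v,'e) tollnet \<Rightarrow> ('v \<Rightarrow> 'v \<Rightarrow> 'e list) \<Rightarrow> 'e list \<Rightarrow> 'e list" where
  "P1 G ups P = buildp G ups P (nths (tp_pairs G P) {n. even n}) 0"

definition P2 :: "('v,'e) tollnet \<Rightarrow> ('v \<Rightarrow> 'v \<Rightarrow> 'e list) \<Rightarrow> 'e list \<Rightarrow> 'e list" where
  "P2 G ups P = buildp G ups P (nths (tp_pairs G P) {n. odd n}) 0"

section \<open>ExploreDescendants (revenue component), with recursion-depth fuel\<close>

fun explore :: "('v,'e) tollnet \<Rightarrow> ('v \<Rightarrow> 'v \<Rightarrow> 'e list) \<Rightarrow> nat \<Rightarrow> 'e list \<Rightarrow> real" where
  "explore G ups 0 P = VP G P"
| "explore G ups (Suc n) P =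
     (if VP G P < Bval G P
      then max (VP G P) (max (explore G ups n (P1 G ups P)) (explore G ups n (P2 G ups P)))
      else VP G P)"

fun alpha :: "nat \<Rightarrow> real" where
  "alpha k = (if k \<le> 1 then 1 else
     (1/2) * Max (set (map (\<lambda>(i, j). 1 + alpha i + alpha j)
        [(i, j). i \<leftarrow> [1..<k], j \<leftarrow> [i..<k], i + j \<le> k])))"

end

theory Submission
  imports Defs
begin


definition flatb :: "('e \<times> 'e list) list \<Rightarrow> 'e list" where
  "flatb xs = concat (map (\<lambda>(e,S). e # S) xs)"

lemma flatb_simps[simp]: "flatb [] = []" "flatb (x#xs) = fst x # snd x @ flatb xs"
  "flatb (xs @ ys) = flatb xs @ flatb ys"
  by (auto simp: flatb_def split: prod.splits)

definition freel :: "('v,'e) tollnet \<Rightarrow> 'e list \<Rightarrow> bool" where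
  "freel G S \<longleftrightarrow> set S \<inter> tollA G = {}"

definition decb :: "('v,'e) tollnet \<Rightarrow> 'e list \<Rightarrow> ('e \<times> 'e list) list \<Rightarrow> bool" where
  "decb G S0 xs \<longleftrightarrow> freel G S0 \<and> (\<forall>p\<in>set xs. fst p \<in> tollA G \<and> freel G (snd p))"

lemma tpos_append: "tpos G (A @ B) = tpos G A @ map (\<lambda>n. n + length A) (tpos G B)"
proof -
  have "[0..<length (A@B)] = [0..<length A] @ map (\<lambda>n. n + length A) [0..<length B]"
    by (simp add: upt_add_eq_append[of 0 "length A" "length B", simplified] map_add_upt add.commute)
  then show ?thesis
    unfolding tpos_def by (auto simp: filter_map o_def nth_append intro!: filter_cong)
qed

lemma tpos_free: "freel G S \<Longrightarrow> tpos G S = []"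
  unfolding tpos_def freel_def filter_empty_conv using nth_mem by fastforce

lemma tpos_cons_toll: "e \<in> tollA G \<Longrightarrow> freel G S \<Longrightarrow> tpos G (e # S) = [0]"
proof -
  assume a: "e \<in> tollA G" "freel G S"
  have "tpos G ([e] @ S) = [0]"
    unfolding tpos_append using a tpos_free[of G S] by (simp add: tpos_def)
  then show ?thesis by simp
qed

definition posb :: "'e list \<Rightarrow> ('e \<times> 'e list) list \<Rightarrow> nat \<Rightarrow> nat" where
  "posb S0 xs k = length S0 + length (flatb (take k xs))"

lemma tpos_flatb: "\<forall>p\<in>set xs. fst p \<in> tollA G \<and> freel G (snd p) \<Longrightarrow>
   tpos G (flatb xs) = map (\<lambda>k. length (flatb (take k xs))) [0..<length xs]"
proof (induction xs rule: rev_induct)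
  case Nil
  then show ?case by (simp add: tpos_def)
next
  case (snoc x xs)
  obtain e S where x: "x = (e,S)" by fastforce
  have t: "tpos G (e # S) = [0]" using snoc.prems x by (auto intro: tpos_cons_toll)
  have "tpos G (flatb (xs @ [x])) = tpos G (flatb xs) @ map (\<lambda>n. n + length (flatb xs)) (tpos G (e#S))"
    by (simp add: x tpos_append del: append.simps)
  also have "\<dots> = map (\<lambda>k. length (flatb (take k xs))) [0..<length xs] @ [length (flatb xs)]"
    using snoc by (simp add: t)
  also have "\<dots> = map (\<lambda>k. length (flatb (take k (xs @ [x])))) [0..<length (xs @ [x])]"
    by (auto simp: take_append)
  finally show ?case .
qed

lemma tpos_decb: "decb G S0 xs \<Longrightarrow> tpos G (S0 @ flatb xs) = map (posb S0 xs) [0..<length xs]"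
  unfolding decb_def posb_def
  by (simp add: tpos_append tpos_free tpos_flatb)

definition segb :: "'e list \<Rightarrow> ('e \<times> 'e list) list \<Rightarrow> nat \<Rightarrow> 'e list" where
  "segb S0 xs a = (if a = 0 then S0 else snd (xs!(a-1)))"

lemma flatb_take_Suc: "k < length xs \<Longrightarrow> flatb (take (Suc k) xs) = flatb (take k xs) @ fst (xs!k) # snd (xs!k)"
  by (simp add: take_Suc_conv_app_nth)

lemma flatb_drop_nth: "k < length xs \<Longrightarrow> flatb (drop k xs) = fst (xs!k) # snd (xs!k) @ flatb (drop (Suc k) xs)"
  by (simp add: Cons_nth_drop_Suc[symmetric])

lemma flatb_take_drop: "flatb xs = flatb (take k xs) @ flatb (drop k xs)"
  by (metis append_take_drop_id flatb_simps(3))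

context
  fixes G :: "('v,'e) tollnet" and S0 :: "'e list" and xs :: "('e \<times> 'e list) list"
  assumes dec: "decb G S0 xs"
begin

lemma dec_ntoll: "ntoll G (S0 @ flatb xs) = length xs"
  by (simp add: ntoll_def tpos_decb[OF dec])

lemma dec_tpos_nth: "k < length xs \<Longrightarrow> tpos G (S0 @ flatb xs) ! k = posb S0 xs k"
  by (simp add: tpos_decb[OF dec])

lemma dec_take_pos: "take (posb S0 xs k) (S0 @ flatb xs) = S0 @ flatb (take k xs)"
proof -
  have "S0 @ flatb xs = (S0 @ flatb (take k xs)) @ flatb (drop k xs)"
    using flatb_take_drop[of xs k] by simp
  then show ?thesis unfolding posb_def by (metis append_eq_conv_conj length_append)
qed

lemma dec_drop_pos: "drop (posb S0 xs k) (S0 @ flatb xs) = flatb (drop k xs)"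
proof -
  have "S0 @ flatb xs = (S0 @ flatb (take k xs)) @ flatb (drop k xs)"
    using flatb_take_drop[of xs k] by simp
  then show ?thesis unfolding posb_def by (metis append_eq_conv_conj length_append)
qed

lemma dec_tau: "1 \<le> k \<Longrightarrow> k \<le> length xs \<Longrightarrow> tau G (S0 @ flatb xs) k = fst (xs!(k-1))"
proof -
  assume k: "1 \<le> k" "k \<le> length xs"
  have "tau G (S0 @ flatb xs) k = (S0 @ flatb xs) ! posb S0 xs (k-1)"
    using k by (simp add: tau_def dec_tpos_nth)
  also have "\<dots> = hd (drop (posb S0 xs (k-1)) (S0 @ flatb xs))"
    using k by (metis dec_drop_pos flatb_drop_nth hd_drop_conv_nth diff_less le_less_trans
       less_one list.distinct(1) not_le drop_all)
  also have "\<dots> = fst (xs!(k-1))" using k by (simp add: dec_drop_pos flatb_drop_nth del: drop_append)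
  finally show ?thesis .
qed

lemma dec_aft: "aft G (S0 @ flatb xs) a = (if a = 0 then 0 else posb S0 xs (a-1) + 1)"
  if "a \<le> length xs"
  using that by (simp add: aft_def dec_tpos_nth)

lemma dec_bef: "bef G (S0 @ flatb xs) b = (if b = length xs + 1 then length (S0 @ flatb xs) else posb S0 xs (b-1))"
  if "1 \<le> b" "b \<le> length xs + 1"
  using that by (simp add: bef_def dec_tpos_nth dec_ntoll)

lemma dec_drop_bef: "1 \<le> b \<Longrightarrow> b \<le> length xs + 1 \<Longrightarrow> drop (bef G (S0 @ flatb xs) b) (S0 @ flatb xs) = flatb (drop (b-1) xs)"
  by (auto simp: dec_bef dec_drop_pos simp del: drop_append)

lemma dec_take_aft: "a \<le> length xs \<Longrightarrow> take (aft G (S0 @ flatb xs) a) (S0 @ flatb xs) =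
   (if a = 0 then [] else S0 @ flatb (take (a-1) xs) @ [fst (xs!(a-1))])"
proof -
  assume a: "a \<le> length xs"
  show ?thesis
  proof (cases "a = 0")
    case True then show ?thesis by (simp add: dec_aft a)
  next
    case False
    have e: "S0 @ flatb xs = (S0 @ flatb (take (a-1) xs) @ [fst (xs!(a-1))]) @ snd (xs!(a-1)) @ flatb (drop a xs)"
      using flatb_take_drop[of xs "a-1"] flatb_drop_nth[of "a-1" xs] a False by simp
    have l: "posb S0 xs (a-1) + 1 = length (S0 @ flatb (take (a-1) xs) @ [fst (xs!(a-1))])"
      by (simp add: posb_def)
    show ?thesis using False a unfolding dec_aft[OF a] by (subst e, simp only: if_False l take_append) simp
  qed
qed

lemma dec_piece: "a < b \<Longrightarrow> b \<le> length xs + 1 \<Longrightarrow>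
   drop (aft G (S0 @ flatb xs) a) (take (bef G (S0 @ flatb xs) b) (S0 @ flatb xs)) =
   segb S0 xs a @ flatb (take (b - a - 1) (drop a xs))"
proof -
  assume ab: "a < b" "b \<le> length xs + 1"
  define P where "P = S0 @ flatb xs"
  have e: "P = take (aft G P a) P @ segb S0 xs a @ flatb (take (b-a-1) (drop a xs)) @ drop (bef G P b) P"
  proof (cases "a = 0")
    case True
    have d: "drop (bef G P b) P = flatb (drop (b-1) xs)" unfolding P_def using ab by (simp add: dec_drop_bef del: drop_append)
    have tk: "take (aft G P a) P = []" using True by (simp add: aft_def)
    have "P = S0 @ flatb (take (b-1) xs) @ flatb (drop (b-1) xs)" using flatb_take_drop P_def by simp
    then show ?thesis using d tk True by (simp add: segb_def)
  next
    case False
    have d: "drop (bef G P b) P = flatb (drop (b-1) xs)" unfolding P_def using ab by (simp add: dec_drop_bef del: drop_append)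
    have t: "take (aft G P a) P = S0 @ flatb (take (a-1) xs) @ [fst (xs!(a-1))]"
      unfolding P_def using ab False dec_take_aft[of a] by simp
    have f1: "flatb xs = flatb (take (a-1) xs) @ flatb (drop (a-1) xs)" by (rule flatb_take_drop)
    have f2: "flatb (drop (a-1) xs) = fst (xs!(a-1)) # snd (xs!(a-1)) @ flatb (drop a xs)"
      using flatb_drop_nth[of "a-1" xs] ab False by simp
    have f3: "flatb (drop a xs) = flatb (take (b-a-1) (drop a xs)) @ flatb (drop (b-1) xs)"
      using flatb_take_drop[of "drop a xs" "b-a-1"] ab by simp
    have sg: "segb S0 xs a = snd (xs!(a-1))" using False by (simp add: segb_def)
    show ?thesis unfolding t d sg by (simp only: P_def f1 f2 f3) simp
  qed
  have lt: "aft G P a \<le> length P"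
  proof (cases "a = 0")
    case True then show ?thesis by (simp add: aft_def)
  next
    case False
    have "flatb xs = flatb (take (a-1) xs) @ flatb (drop (a-1) xs)" by (rule flatb_take_drop)
    moreover have "flatb (drop (a-1) xs) = fst (xs!(a-1)) # snd (xs!(a-1)) @ flatb (drop a xs)"
      using flatb_drop_nth[of "a-1" xs] ab False by simp
    ultimately have "posb S0 xs (a-1) < length P" unfolding posb_def P_def by simp
    then show ?thesis using False ab unfolding P_def by (simp add: dec_aft)
  qed
  have "take (bef G P b) P @ drop (bef G P b) P = (take (aft G P a) P @ segb S0 xs a @ flatb (take (b-a-1) (drop a xs))) @ drop (bef G P b) P"
    using e by simp
  then have tb: "take (bef G P b) P = take (aft G P a) P @ segb S0 xs a @ flatb (take (b-a-1) (drop a xs))"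
    by (simp only: append_same_eq)
  have "length (take (aft G P a) P) = aft G P a" using lt by simp
  then show ?thesis unfolding P_def[symmetric] tb by (metis append_eq_conv_conj)
qed

end


lemma Ufree_nonneg: "Ufree G u v \<ge> 0"
  unfolding Ufree_def
proof (rule Inf_greatest)
  fix x assume "x \<in> ereal ` {L0 G Q |Q. spath G (freeA G) u Q v}"
  then obtain Q where x: "x = ereal (L0 G Q)" by auto
  have "L0 G Q \<ge> 0" unfolding L0_def plen_def
    by (rule sum_list_nonneg) (auto simp: arc_cost_def)
  then show "0 \<le> x" using x by simp
qed

lemma Uij_nonneg: "Uij G P i j \<ge> 0"
  by (simp add: Uij_def Ufree_nonneg)

definition Lr :: "('v,'e) tollnet \<Rightarrow> 'e list \<Rightarrow> nat \<Rightarrow> nat \<Rightarrow> real" where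
  "Lr G P k l = (\<Sum>i\<in>{k..<l}. real_of_ereal (Uij G P i (i + 1))) + (\<Sum>i\<in>{k+1..<l}. real (c G (tau G P i)))"

context
  fixes G :: "('v,'e) tollnet" and P :: "'e list"
  assumes fin: "\<And>l. l \<le> ntoll G P \<Longrightarrow> Uij G P l (l+1) \<noteq> \<infinity>"
begin

lemma Lij_Lr: "j \<le> ntoll G P + 1 \<Longrightarrow> Lij G P i j = ereal (Lr G P i j)"
proof -
  assume j: "j \<le> ntoll G P + 1"
  have "\<forall>l\<in>{i..<j}. Uij G P l (l+1) = ereal (real_of_ereal (Uij G P l (l+1)))"
  proof
    fix l assume "l \<in> {i..<j}"
    then have "Uij G P l (l+1) \<noteq> \<infinity>" using fin j by auto
    moreover have "Uij G P l (l+1) \<noteq> -\<infinity>" using Uij_nonneg[of G P l "l+1"] by auto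
    ultimately show "Uij G P l (l+1) = ereal (real_of_ereal (Uij G P l (l+1)))"
      by (cases "Uij G P l (l+1)") auto
  qed
  then have "(\<Sum>l\<in>{i..<j}. Uij G P l (l+1)) = (\<Sum>l\<in>{i..<j}. ereal (real_of_ereal (Uij G P l (l+1))))"
    by (intro sum.cong) auto
  also have "\<dots> = ereal (\<Sum>l\<in>{i..<j}. real_of_ereal (Uij G P l (l+1)))"
    by (rule sum_ereal)
  finally show ?thesis unfolding Lij_def Lr_def by simp
qed

end

definition ssum :: "(nat \<Rightarrow> real) \<Rightarrow> nat \<Rightarrow> nat \<Rightarrow> real" where
  "ssum t a b = (\<Sum>x\<in>{a+1..<b}. t x)"

definition Dd :: "('v,'e) tollnet \<Rightarrow> 'e list \<Rightarrow> nat \<Rightarrow> nat \<Rightarrow> ereal" where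
  "Dd G P i j = Uij G P i j - Lij G P i j"

definition prp :: "('v,'e) tollnet \<Rightarrow> 'e list \<Rightarrow> nat \<Rightarrow> (nat \<Rightarrow> real) \<Rightarrow> (nat \<Rightarrow> nat \<times> nat) \<Rightarrow> nat \<Rightarrow> bool" where
  "prp G P k t pr l \<longleftrightarrow> (\<exists>\<kappa>. 1 \<le> \<kappa> \<and> \<kappa> \<le> l \<and> fst (pr l) < \<kappa> \<and> l < snd (pr l) \<and> snd (pr l) \<le> k
     \<and> (\<forall>l'. 1 \<le> l' \<and> l' < \<kappa> \<longrightarrow> snd (pr l') \<le> \<kappa>) \<and> (\<forall>l'. \<kappa> < l' \<and> l' < snd (pr l) \<longrightarrow> t l' = 0)
     \<and> ereal (ssum t (fst (pr l)) (snd (pr l))) = Dd G P (fst (pr l)) (snd (pr l)))"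

definition mrinv :: "('v,'e) tollnet \<Rightarrow> 'e list \<Rightarrow> nat \<Rightarrow> (nat \<Rightarrow> real) \<Rightarrow> (nat \<Rightarrow> nat \<times> nat) \<Rightarrow> bool" where
  "mrinv G P k t pr \<longleftrightarrow> 1 \<le> k \<and> k \<le> ntoll G P + 1 \<and> (\<forall>l\<ge>k. t l = 0) \<and> (\<forall>l. 0 \<le> t l)
     \<and> (\<forall>i j. i < j \<and> j \<le> ntoll G P + 1 \<longrightarrow> ereal (ssum t i j) \<le> Dd G P i j)
     \<and> (\<forall>l. 1 \<le> l \<and> l < k \<longrightarrow> prp G P k t pr l)"

lemma ereal_le_minus_real: "ereal a \<le> x - ereal b \<longleftrightarrow> ereal (b + a) \<le> x"
  by (cases x) auto

lemma ereal_eq_minus_real: "ereal a = x - ereal b \<longleftrightarrow> ereal (b + a) = x"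
  by (cases x) auto

lemma ssum_upd: "ssum (t(k := v)) a b = ssum t a b + (if a < k \<and> k < b then v - t k else 0)"
proof (cases "a < k \<and> k < b")
  case True
  then have k: "k \<in> {a+1..<b}" by auto
  have "ssum (t(k := v)) a b = (\<Sum>x\<in>{a+1..<b}. t x) - t k + v"
    unfolding ssum_def using sum.remove[OF _ k, of "t(k:=v)"] sum.remove[OF _ k, of t]
    by (simp add: sum.cong[of _ _ "t(k:=v)" t])
  then show ?thesis using True by (simp add: ssum_def)
next
  case False
  then have "k \<notin> {a+1..<b}" by auto
  then show ?thesis using False unfolding ssum_def by (auto intro!: sum.cong)
qed

context
  fixes G :: "('v,'e) tollnet" and P :: "'e list"
  assumes fin: "\<And>l. l \<le> ntoll G P \<Longrightarrow> Uij G P l (l+1) \<noteq> \<infinity>"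
    and dnn: "\<And>i j. i < j \<Longrightarrow> j \<le> ntoll G P + 1 \<Longrightarrow> Lij G P i j \<le> Uij G P i j"
    and u0: "Uij G P 0 (ntoll G P + 1) \<noteq> \<infinity>"
begin

lemma Dd_nonneg: "i < j \<Longrightarrow> j \<le> ntoll G P + 1 \<Longrightarrow> 0 \<le> Dd G P i j"
  using dnn[of i j] Lij_Lr[OF fin, of j i] by (cases "Uij G P i j") (auto simp: Dd_def)

lemma Dd_ninf: "j \<le> ntoll G P + 1 \<Longrightarrow> Dd G P i j \<noteq> -\<infinity>"
  using Lij_Lr[OF fin, of j i] Uij_nonneg[of G P i j] by (cases "Uij G P i j") (auto simp: Dd_def)

lemma mrinv_init: "mrinv G P 1 (\<lambda>_. 0) (\<lambda>_. (0,0))"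
  unfolding mrinv_def using Dd_nonneg by (auto simp: ssum_def zero_ereal_def[symmetric])

lemma mr_obj_eq: "mr_obj G P t k (i,j) = Dd G P i j - ereal (ssum t i k)"
  by (simp add: mr_obj_def Dd_def ssum_def)

lemma ssum_zero_tail: "\<forall>l\<ge>k. t l = 0 \<Longrightarrow> k \<le> j \<Longrightarrow> ssum t i j = ssum t i k"
proof -
  assume z: "\<forall>l\<ge>k. t l = 0" and kj: "k \<le> j"
  show ?thesis
  proof (cases "i + 1 \<le> k")
    case True
    have "{i+1..<j} = {i+1..<k} \<union> {k..<j}" using True kj by auto
    moreover have "sum t {k..<j} = 0" using z by simp
    ultimately show ?thesis unfolding ssum_def
      by (simp add: sum.union_disjoint ivl_disj_int_two(3))
  next
    case False
    then have "sum t {i+1..<j} = 0" using z by simp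
    then show ?thesis using False by (simp add: ssum_def)
  qed
qed

lemma mr_step:
  assumes inv: "mrinv G P k t pr" and k: "k < ntoll G P + 1"
  defines "M \<equiv> mr_min G P t k" and "j' \<equiv> mr_j G P t k" and "i' \<equiv> mr_i G P t k"
  defines "t' \<equiv> (\<lambda>l. if l = k then real_of_ereal M else if k < l \<and> l < j' then 0 else t l)"
  defines "pr' \<equiv> (\<lambda>l. if k \<le> l \<and> l < j' then (i', j') else pr l)"
  shows "mrinv G P j' t' pr' \<and> k < j'"
proof -
  let ?m = "ntoll G P"
  let ?pairs = "mr_pairs G P k"
  let ?obj = "mr_obj G P t k"
  have k1: "1 \<le> k" and z: "\<forall>l\<ge>k. t l = 0" and tnn: "\<forall>l. 0 \<le> t l"
    and C: "\<forall>i j. i < j \<and> j \<le> ?m + 1 \<longrightarrow> ereal (ssum t i j) \<le> Dd G P i j"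
    and PR: "\<forall>l. 1 \<le> l \<and> l < k \<longrightarrow> prp G P k t pr l"
    using inv unfolding mrinv_def by auto
  have fp: "finite ?pairs"
    by (rule finite_subset[of _ "{..<k} \<times> {..?m+1}"]) (auto simp: mr_pairs_def)
  have p0: "(0, ?m+1) \<in> ?pairs" using k k1 by (auto simp: mr_pairs_def)
  have Mmin: "\<And>p. p \<in> ?pairs \<Longrightarrow> M \<le> ?obj p"
    unfolding M_def mr_min_def using fp by (auto intro: Min_le)
  have Min: "M \<in> ?obj ` ?pairs"
    unfolding M_def mr_min_def using fp p0 by (intro Min_in) auto
  define J where "J = {j. \<exists>i. (i, j) \<in> ?pairs \<and> ?obj (i, j) = M}"
  have "J \<noteq> {}" using Min unfolding J_def by force
  moreover have "finite J" unfolding J_def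
    by (rule finite_subset[of _ "{..?m+1}"]) (auto simp: mr_pairs_def)
  ultimately have "j' \<in> J" unfolding j'_def mr_j_def J_def M_def[symmetric] by (intro Max_in) 
  define I where "I = {i. (i, j') \<in> ?pairs \<and> ?obj (i, j') = M}"
  have "I \<noteq> {}" using \<open>j' \<in> J\<close> unfolding J_def I_def by auto
  moreover have "finite I" unfolding I_def
    by (rule finite_subset[of _ "{..<k}"]) (auto simp: mr_pairs_def)
  ultimately have "i' \<in> I" unfolding i'_def mr_i_def I_def M_def[symmetric] j'_def[symmetric] by (intro Min_in)
  then have ij: "i' < k" "k < j'" "j' \<le> ?m + 1" and objM: "?obj (i', j') = M"
    unfolding I_def mr_pairs_def by auto
  have objnn: "0 \<le> ?obj (i, j)" if "(i,j) \<in> ?pairs" for i j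
  proof -
    have "i < j" "j \<le> ?m+1" "k \<le> j" using that by (auto simp: mr_pairs_def)
    then have "ereal (ssum t i j) \<le> Dd G P i j" using C by blast
    then have "ereal (ssum t i k) \<le> Dd G P i j" using ssum_zero_tail[OF z, of j i] \<open>k \<le> j\<close> by simp
    then show ?thesis unfolding mr_obj_eq using ereal_le_minus_real[of 0 "Dd G P i j" "ssum t i k"]
      by (metis add.right_neutral zero_ereal_def)
  qed
  have Mnn: "0 \<le> M" using Min objnn by auto
  have "M \<le> ?obj (0, ?m+1)" using Mmin p0 by auto
  moreover have "?obj (0, ?m+1) \<noteq> \<infinity>"
    using u0 Lij_Lr[OF fin, of "?m+1" 0] unfolding mr_obj_eq Dd_def by (cases "Uij G P 0 (?m+1)") auto
  ultimately have "M \<noteq> \<infinity>" by auto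
  then obtain tk where Mtk: "M = ereal tk" and tk: "0 \<le> tk" using Mnn by (cases M) auto
  have t'eq: "t' = t(k := tk)"
    unfolding t'_def using z Mtk by (auto simp: fun_eq_iff)
  have ss': "ssum t' a b = ssum t a b + (if a < k \<and> k < b then tk else 0)" for a b
    unfolding t'eq ssum_upd using z by simp
  have C': "ereal (ssum t' i j) \<le> Dd G P i j" if "i < j" "j \<le> ?m + 1" for i j
  proof (cases "i < k \<and> k < j")
    case True
    then have "(i,j) \<in> ?pairs" using that by (auto simp: mr_pairs_def)
    then have "ereal tk \<le> Dd G P i j - ereal (ssum t i k)" using Mmin Mtk mr_obj_eq by metis
    then have "ereal (ssum t i k + tk) \<le> Dd G P i j" by (simp add: ereal_le_minus_real)
    moreover have "ssum t i j = ssum t i k" using ssum_zero_tail[OF z, of j i] True by simp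
    ultimately show ?thesis using True ss' by simp
  next
    case False
    then have "ssum t' i j = ssum t i j" using ss'[of i j] by (auto split: if_splits)
    then show ?thesis using C that by auto
  qed
  have Dij: "ereal (ssum t' i' j') = Dd G P i' j'"
  proof -
    have "ereal tk = Dd G P i' j' - ereal (ssum t i' k)" using objM Mtk mr_obj_eq by metis
    then have "ereal (ssum t i' k + tk) = Dd G P i' j'" by (simp add: ereal_eq_minus_real)
    moreover have "ssum t i' j' = ssum t i' k" using ssum_zero_tail[OF z, of j' i'] ij by simp
    ultimately show ?thesis using ss'[of i' j'] ij by simp
  qed
  have PR': "prp G P j' t' pr' l" if l: "1 \<le> l" "l < j'" for l
  proof (cases "k \<le> l")
    case True
    then have prl: "pr' l = (i', j')" using l by (simp add: pr'_def)
    show ?thesis unfolding prp_def prl fst_conv snd_conv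
    proof (intro exI[of _ k] conjI allI impI)
      show "1 \<le> k" "k \<le> l" "i' < k" "l < j'" "j' \<le> j'" using k1 True ij l by auto
      show "snd (pr' l') \<le> k" if "1 \<le> l' \<and> l' < k" for l'
        using that PR unfolding prp_def pr'_def by auto
      show "t' l' = 0" if "k < l' \<and> l' < j'" for l' using that by (simp add: t'_def)
      show "ereal (ssum t' i' j') = Dd G P i' j'" by (rule Dij)
    qed
  next
    case False
    then have prl: "pr' l = pr l" using l by (simp add: pr'_def)
    from PR False l obtain \<kappa> where kap: "1 \<le> \<kappa>" "\<kappa> \<le> l" "fst (pr l) < \<kappa>" "l < snd (pr l)" "snd (pr l) \<le> k"
      "\<forall>l'. 1 \<le> l' \<and> l' < \<kappa> \<longrightarrow> snd (pr l') \<le> \<kappa>" "\<forall>l'. \<kappa> < l' \<and> l' < snd (pr l) \<longrightarrow> t l' = 0"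
      "ereal (ssum t (fst (pr l)) (snd (pr l))) = Dd G P (fst (pr l)) (snd (pr l))"
      unfolding prp_def by auto
    show ?thesis unfolding prp_def prl
    proof (intro exI[of _ \<kappa>] conjI allI impI)
      show "1 \<le> \<kappa>" "\<kappa> \<le> l" "fst (pr l) < \<kappa>" "l < snd (pr l)" using kap by auto
      show "snd (pr l) \<le> j'" using kap ij by auto
      show "snd (pr' l') \<le> \<kappa>" if "1 \<le> l' \<and> l' < \<kappa>" for l'
        using that kap False unfolding pr'_def by auto
      show "t' l' = 0" if "\<kappa> < l' \<and> l' < snd (pr l)" for l'
        using that kap unfolding t'eq by auto
      show "ereal (ssum t' (fst (pr l)) (snd (pr l))) = Dd G P (fst (pr l)) (snd (pr l))"
        using kap ss' by simp
    qed
  qed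
  have "mrinv G P j' t' pr'"
    unfolding mrinv_def
  proof (intro conjI allI impI)
    show "1 \<le> j'" "j' \<le> ?m + 1" using ij k1 by auto
    show "t' l = 0" if "j' \<le> l" for l using that ij z unfolding t'eq by auto
    show "0 \<le> t' l" for l using tnn tk unfolding t'eq by auto
    show "ereal (ssum t' i j) \<le> Dd G P i j" if "i < j \<and> j \<le> ?m + 1" for i j using C' that by auto
    show "prp G P j' t' pr' l" if "1 \<le> l \<and> l < j'" for l using PR' that by auto
  qed
  then show ?thesis using ij by auto
qed

lemma mr_loop_inv:
  "mrinv G P k t pr \<Longrightarrow> ntoll G P + 1 - k \<le> n \<Longrightarrow>
     mrinv G P (ntoll G P + 1) (fst (mr_loop G P n k t pr)) (snd (mr_loop G P n k t pr))"
proof (induction n arbitrary: k t pr)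
  case 0
  then have "k = ntoll G P + 1" unfolding mrinv_def by auto
  then show ?case using 0 by simp
next
  case (Suc n)
  show ?case
  proof (cases "k < ntoll G P + 1")
    case True
    let ?tk = "real_of_ereal (mr_min G P t k)" and ?j = "mr_j G P t k" and ?i = "mr_i G P t k"
    let ?t' = "(\<lambda>l. if l = k then ?tk else if k < l \<and> l < ?j then 0 else t l)"
    let ?pr' = "(\<lambda>l. if k \<le> l \<and> l < ?j then (?i, ?j) else pr l)"
    have st: "mrinv G P ?j ?t' ?pr' \<and> k < ?j" using mr_step[OF Suc.prems(1) True] by simp
    have "mr_loop G P (Suc n) k t pr = mr_loop G P n ?j ?t' ?pr'" using True by (simp add: Let_def)
    moreover have "ntoll G P + 1 - ?j \<le> n" using st Suc.prems(2) by auto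
    ultimately show ?thesis using Suc.IH st by simp
  next
    case False
    then have "k = ntoll G P + 1" using Suc.prems unfolding mrinv_def by auto
    then show ?thesis using Suc.prems by simp
  qed
qed

lemma maxrev_inv: "mrinv G P (ntoll G P + 1) (fst (maxrev G P)) (snd (maxrev G P))"
  unfolding maxrev_def by (rule mr_loop_inv[OF mrinv_init]) simp

end


lemma nths_even_Cons: "nths (x#xs) {n. even n} = x # nths xs {n. odd n}"
  by (simp add: nths_Cons)

lemma nths_odd_Cons: "nths (x#xs) {n. odd n} = nths xs {n. even n}"
  by (simp add: nths_Cons)

fun sdl :: "(nat \<times> nat) list \<Rightarrow> bool" where
  "sdl [] = True"
| "sdl [p] = True"
| "sdl (p # q # r) = (snd p \<le> fst q \<and> sdl (q # r))"

definition altI :: "(nat \<times> nat) list \<Rightarrow> bool" where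
  "altI xs \<longleftrightarrow> (\<forall>h. h + 2 < length xs \<longrightarrow> snd (xs!h) \<le> fst (xs!(h+2)))"

lemma altI_tl: "altI (x # xs) \<Longrightarrow> altI xs"
  unfolding altI_def by (auto dest: spec[of _ "Suc _"])

lemma altI_nths: "altI xs \<Longrightarrow> sdl (nths xs {n. even n}) \<and> sdl (nths xs {n. odd n})"
proof (induction xs)
  case Nil then show ?case by simp
next
  case (Cons x xs)
  have IH: "sdl (nths xs {n. even n})" "sdl (nths xs {n. odd n})"
    using Cons altI_tl by blast+
  have "sdl (x # nths xs {n. odd n})"
  proof (cases xs)
    case Nil then show ?thesis by simp
  next
    case (Cons y w)
    show ?thesis
    proof (cases w)
      case Nil then show ?thesis using \<open>xs = y # w\<close> by (simp add: nths_odd_Cons)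
    next
      case (Cons z v)
      have "snd x \<le> fst z" using Cons.prems \<open>xs = y # w\<close> \<open>w = z # v\<close>
        unfolding altI_def by (auto dest: spec[of _ 0])
      moreover have "nths xs {n. odd n} = z # nths v {n. odd n}"
        using \<open>xs = y # w\<close> \<open>w = z # v\<close> by (simp add: nths_odd_Cons nths_even_Cons)
      ultimately show ?thesis using IH(2) by simp
    qed
  qed
  then show ?case using IH by (simp add: nths_odd_Cons nths_even_Cons)
qed

lemma sum_nths_split: fixes f :: "_ \<Rightarrow> real"
  shows "sum_list (map f (nths xs {n. even n})) + sum_list (map f (nths xs {n. odd n})) = sum_list (map f xs)"
proof (induction xs)
  case Nil then show ?case by simp
next
  case (Cons x xs)
  then show ?case unfolding nths_odd_Cons nths_even_Cons by simp
qed

lemma set_nths_split: "set (nths xs {n. even n}) \<union> set (nths xs {n. odd n}) = set xs"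
  by (induction xs) (auto simp add: nths_odd_Cons nths_even_Cons)

lemma nths_even_nonempty: "xs \<noteq> [] \<Longrightarrow> nths xs {n. even n} \<noteq> []"
  by (cases xs) (auto simp: nths_even_Cons)

lemma nths_odd_nonempty: "length xs \<ge> 2 \<Longrightarrow> nths xs {n. odd n} \<noteq> []"
proof (cases xs)
  case (Cons y w)
  assume "length xs \<ge> 2"
  then have "w \<noteq> []" using Cons by auto
  then show ?thesis unfolding Cons nths_odd_Cons by (rule nths_even_nonempty)
qed simp

lemma tp_rec_simp: "tp_rec pr (Suc n) l = (if l = 0 then [] else pr l # tp_rec pr n (fst (pr l)))"
  by simp

definition altR :: "(nat \<times> nat) list \<Rightarrow> bool" where
  "altR xs \<longleftrightarrow> (\<forall>h. h + 2 < length xs \<longrightarrow> snd (xs!(h+2)) \<le> fst (xs!h))"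

context
  fixes G :: "('v,'e) tollnet" and P :: "'e list" and t pr
  assumes inv: "mrinv G P (ntoll G P + 1) t pr"
begin

lemma inv_prp: "1 \<le> l \<Longrightarrow> l \<le> ntoll G P \<Longrightarrow> prp G P (ntoll G P + 1) t pr l"
  using inv unfolding mrinv_def by auto

lemma inv_tnn: "0 \<le> t l"
  using inv unfolding mrinv_def by auto

lemma inv_fst_less: "1 \<le> l \<Longrightarrow> l \<le> ntoll G P \<Longrightarrow> fst (pr l) < l"
  using inv_prp unfolding prp_def by fastforce

lemma inv_ssum_pr: "1 \<le> l \<Longrightarrow> l \<le> ntoll G P \<Longrightarrow> ssum t (fst (pr l)) (snd (pr l)) = (\<Sum>x\<in>{fst (pr l)+1..l}. t x)"
proof -
  assume l: "1 \<le> l" "l \<le> ntoll G P"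
  obtain \<kappa> where k: "\<kappa> \<le> l" "fst (pr l) < \<kappa>" "l < snd (pr l)"
     "\<forall>l'. \<kappa> < l' \<and> l' < snd (pr l) \<longrightarrow> t l' = 0"
    using inv_prp[OF l] unfolding prp_def by blast
  have "{fst (pr l)+1..<snd (pr l)} = {fst (pr l)+1..l} \<union> {l<..<snd (pr l)}" using k by auto
  moreover have "sum t {l<..<snd (pr l)} = 0" using k by (auto intro!: sum.neutral)
  moreover have "sum t ({fst (pr l)+1..l} \<union> {l<..<snd (pr l)}) = sum t {fst (pr l)+1..l} + sum t {l<..<snd (pr l)}"
    by (rule sum.union_disjoint) auto
  ultimately show ?thesis unfolding ssum_def by simp
qed

lemma tp_T1: "l \<le> ntoll G P \<Longrightarrow> l < n \<Longrightarrow>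
  sum_list (map (\<lambda>p. ssum t (fst p) (snd p)) (tp_rec pr n l)) = (\<Sum>x\<in>{1..l}. t x)"
proof (induction n arbitrary: l)
  case 0 then show ?case by simp
next
  case (Suc n)
  show ?case
  proof (cases "l = 0")
    case True then show ?thesis by simp
  next
    case False
    let ?a = "fst (pr l)"
    have a: "?a < l" using inv_fst_less[of l] False Suc.prems by auto
    have "sum_list (map (\<lambda>p. ssum t (fst p) (snd p)) (tp_rec pr (Suc n) l)) =
          (\<Sum>x\<in>{?a+1..l}. t x) + (\<Sum>x\<in>{1..?a}. t x)"
      using False Suc.IH[of ?a] a Suc.prems inv_ssum_pr[of l] by simp
    also have "\<dots> = (\<Sum>x\<in>{1..l}. t x)"
    proof -
      have "{1..l} = {1..?a} \<union> {?a+1..l}" using a by auto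
      moreover have "sum t ({1..?a} \<union> {?a+1..l}) = sum t {1..?a} + sum t {?a+1..l}"
        by (rule sum.union_disjoint) auto
      ultimately show ?thesis by simp
    qed
    finally show ?thesis .
  qed
qed

lemma tp_T2: "l \<le> ntoll G P \<Longrightarrow> l < n \<Longrightarrow> 1 \<le> x \<Longrightarrow> x \<le> l \<Longrightarrow>
  \<exists>p\<in>set (tp_rec pr n l). fst p < x \<and> x < snd p"
proof (induction n arbitrary: l)
  case 0 then show ?case by simp
next
  case (Suc n)
  have l: "l \<noteq> 0" using Suc.prems by auto
  let ?a = "fst (pr l)"
  have a: "?a < l" using inv_fst_less[of l] l Suc.prems by auto
  have b: "l < snd (pr l)" using inv_prp[of l] l Suc.prems unfolding prp_def by auto
  show ?case
  proof (cases "x \<le> ?a")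
    case True
    then obtain p where "p \<in> set (tp_rec pr n ?a)" "fst p < x \<and> x < snd p"
      using Suc.IH[of ?a] a Suc.prems by auto
    then show ?thesis using l by auto
  next
    case False
    then show ?thesis using l b Suc.prems by (intro bexI[of _ "pr l"]) auto
  qed
qed

lemma tp_T3: "l \<le> ntoll G P \<Longrightarrow> p \<in> set (tp_rec pr n l) \<Longrightarrow>
  fst p + 1 < snd p \<and> snd p \<le> ntoll G P + 1 \<and> ereal (ssum t (fst p) (snd p)) = Dd G P (fst p) (snd p)"
proof (induction n arbitrary: l)
  case 0 then show ?case by simp
next
  case (Suc n)
  have l: "l \<noteq> 0" using Suc.prems by (auto split: if_splits)
  have a: "fst (pr l) < l" using inv_fst_less[of l] l Suc.prems by auto
  show ?case
  proof (cases "p = pr l")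
    case True
    then show ?thesis using inv_prp[of l] l Suc.prems unfolding prp_def by auto
  next
    case False
    then have "p \<in> set (tp_rec pr n (fst (pr l)))" using Suc.prems l by auto
    then show ?thesis using Suc.IH[of "fst (pr l)"] a Suc.prems by auto
  qed
qed


lemma tp_T4: "l \<le> ntoll G P \<Longrightarrow> altR (tp_rec pr n l)"
proof (induction n arbitrary: l)
  case 0 then show ?case by (simp add: altR_def)
next
  case (Suc n)
  show ?case
  proof (cases "l = 0")
    case True then show ?thesis by (simp add: altR_def)
  next
    case False
    let ?a = "fst (pr l)"
    let ?cs = "tp_rec pr n ?a"
    have a: "?a < l" using inv_fst_less[of l] False Suc.prems by auto
    have IH: "altR ?cs" using Suc.IH[of ?a] a Suc.prems by auto
    have first: "snd (?cs ! 1) \<le> ?a" if len: "2 \<le> length ?cs"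
    proof -
      obtain n' where n: "n = Suc n'" using len by (cases n) auto
      have a0: "?a \<noteq> 0" using len n by (auto split: if_splits)
      have cs: "?cs = pr ?a # tp_rec pr n' (fst (pr ?a))" using n a0 by simp
      then obtain n'' where n': "n' = Suc n''" using len by (cases n') auto
      have b0: "fst (pr ?a) \<noteq> 0" using len cs n' by (auto split: if_splits)
      have c1: "?cs ! 1 = pr (fst (pr ?a))" using cs n' b0 by simp
      obtain \<kappa> where k: "fst (pr ?a) < \<kappa>" "\<kappa> \<le> ?a" "\<forall>l'. 1 \<le> l' \<and> l' < \<kappa> \<longrightarrow> snd (pr l') \<le> \<kappa>"
        using inv_prp[of ?a] a0 a Suc.prems unfolding prp_def by auto
      have "1 \<le> fst (pr ?a)" using b0 by simp
      then have "snd (pr (fst (pr ?a))) \<le> \<kappa>" using k(1,3) by blast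
      then show ?thesis unfolding c1 using k(2) by simp
    qed
    show ?thesis unfolding altR_def
    proof (intro allI impI)
      fix h assume h: "h + 2 < length (tp_rec pr (Suc n) l)"
      have cs: "tp_rec pr (Suc n) l = pr l # ?cs" using False by simp
      show "snd (tp_rec pr (Suc n) l ! (h + 2)) \<le> fst (tp_rec pr (Suc n) l ! h)"
      proof (cases h)
        case 0 then show ?thesis using cs first h by (simp add: numeral_2_eq_2)
      next
        case (Suc h')
        then show ?thesis using cs IH h unfolding altR_def by (auto simp: numeral_2_eq_2)
      qed
    qed
  qed
qed

lemma tp_T5: "1 \<le> l \<Longrightarrow> l \<le> ntoll G P \<Longrightarrow> l < n \<Longrightarrow>
   tp_rec pr n l = pr l # tp_rec pr (n - 1) (fst (pr l))"
  by (cases n) auto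

end

lemma altR_rev: "altR xs \<Longrightarrow> altI (rev xs)"
  unfolding altR_def altI_def
proof (intro allI impI)
  fix h assume A: "\<forall>h. h + 2 < length xs \<longrightarrow> snd (xs ! (h + 2)) \<le> fst (xs ! h)"
    and h: "h + 2 < length (rev xs)"
  let ?g = "length xs - Suc (Suc (Suc h))"
  have "snd (xs ! (?g + 2)) \<le> fst (xs ! ?g)" using A h by auto
  moreover have e: "length xs - Suc h = ?g + 2" using h by auto
  moreover have "rev xs ! h = xs ! (?g + 2)" using h e by (simp add: rev_nth)
  moreover have "rev xs ! (h+2) = xs ! ?g" using h by (simp add: rev_nth)
  ultimately show "snd (rev xs ! h) \<le> fst (rev xs ! (h + 2))" by simp
qed


lemma L0_append: "L0 G (A @ B) = L0 G A + L0 G B"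
  by (simp add: L0_def plen_def)

lemma L0_Cons: "L0 G (e # A) = arc_cost G (\<lambda>_. 0) e + L0 G A"
  by (simp add: L0_def plen_def)

lemma L0_nonneg: "0 \<le> L0 G A"
  unfolding L0_def plen_def by (rule sum_list_nonneg) (auto simp: arc_cost_def)

definition inW :: "(nat \<times> nat) list \<Rightarrow> nat \<Rightarrow> bool" where
  "inW A x \<longleftrightarrow> (\<exists>p\<in>set A. fst p < x \<and> x < snd p)"

fun sdl2 :: "(nat \<times> nat) list \<Rightarrow> bool" where
  "sdl2 [] = True"
| "sdl2 [p] = (fst p < snd p)"
| "sdl2 (p # q # r) = (fst p < snd p \<and> snd p \<le> fst q \<and> sdl2 (q # r))"

lemma sdl2_Cons: "sdl2 (p # R) \<longleftrightarrow> fst p < snd p \<and> sdl2 R \<and> (R \<noteq> [] \<longrightarrow> snd p \<le> fst (hd R))"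
  by (cases R) auto

lemma sdl2_fst_ge: "sdl2 (p # R) \<Longrightarrow> q \<in> set R \<Longrightarrow> snd p \<le> fst q"
proof (induction R arbitrary: p)
  case Nil then show ?case by simp
next
  case (Cons r R)
  then have "snd p \<le> fst r" "sdl2 (r # R)" "fst r < snd r" by (auto simp: sdl2_Cons)
  then show ?case using Cons.IH[of r] Cons.prems by (cases "q = r") auto
qed

context
  fixes G :: "('v,'e) tollnet" and S0 :: "'e list" and xs :: "('e \<times> 'e list) list"
  assumes dec: "decb G S0 xs"
begin

lemma dec_mid: "1 \<le> u \<Longrightarrow> u \<le> a \<Longrightarrow> a \<le> length xs \<Longrightarrow>
  drop (bef G (S0 @ flatb xs) u) (take (aft G (S0 @ flatb xs) a) (S0 @ flatb xs)) =
  flatb (take (a - u) (drop (u-1) xs)) @ [fst (xs!(a-1))]"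
proof -
  assume uw: "1 \<le> u" "u \<le> a" "a \<le> length xs"
  define P where "P = S0 @ flatb xs"
  have ta: "take (aft G P a) P = S0 @ flatb (take (a-1) xs) @ [fst (xs!(a-1))]"
    unfolding P_def using uw dec_take_aft[OF dec, of a] by simp
  have bc: "bef G P u = posb S0 xs (u-1)" unfolding P_def using uw dec_bef[OF dec, of u] by simp
  have "take (a-1) xs = take (u-1) xs @ take (a - u) (drop (u-1) xs)"
  proof -
    have "a - 1 = (u-1) + (a-u)" using uw by simp
    then show ?thesis by (simp only: take_add)
  qed
  then have "take (aft G P a) P = (S0 @ flatb (take (u-1) xs)) @ flatb (take (a - u) (drop (u-1) xs)) @ [fst (xs!(a-1))]"
    using ta by simp
  moreover have "length (S0 @ flatb (take (u-1) xs)) = bef G P u" using bc by (simp add: posb_def)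
  ultimately show ?thesis unfolding P_def[symmetric] by (metis append_eq_conv_conj)
qed

lemma map_blocks: "1 \<le> u \<Longrightarrow> u \<le> w \<Longrightarrow> w \<le> length xs + 1 \<Longrightarrow>
  map (\<lambda>k. xs!(k-1)) [u..<w] = take (w - u) (drop (u-1) xs)"
  by (rule nth_equalityI) (auto simp: nth_append)

end


definition Snew :: "('v,'e) tollnet \<Rightarrow> ('v \<Rightarrow> 'v \<Rightarrow> 'e list) \<Rightarrow> 'e list \<Rightarrow> ('e \<times> 'e list) list \<Rightarrow> (nat \<times> nat) list \<Rightarrow> nat \<Rightarrow> 'e list" where
  "Snew G ups S0 xs A k = (case map_of A k of
      Some b \<Rightarrow> ups (TERMv G (S0 @ flatb xs) k) (INITv G (S0 @ flatb xs) b)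
    | None \<Rightarrow> segb S0 xs k)"

definition blocks1 :: "('v,'e) tollnet \<Rightarrow> ('v \<Rightarrow> 'v \<Rightarrow> 'e list) \<Rightarrow> 'e list \<Rightarrow> ('e \<times> 'e list) list \<Rightarrow> (nat \<times> nat) list \<Rightarrow> nat list \<Rightarrow> ('e \<times> 'e list) list" where
  "blocks1 G ups S0 xs A ks = map (\<lambda>k. (fst (xs!(k-1)), Snew G ups S0 xs A k)) ks"

lemma map_of_None_less: "sdl2 A \<Longrightarrow> (\<forall>p\<in>set A. k < fst p) \<Longrightarrow> map_of A k = None"
  by (auto simp: map_of_eq_None_iff)

lemma filter_split3: "u \<le> a \<Longrightarrow> a < b \<Longrightarrow> b \<le> n \<Longrightarrow>
   filter Q [u..<n] = filter Q [u..<a] @ filter Q [a..<b] @ filter Q [b..<n]"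
proof -
  have upt3: "i \<le> j \<Longrightarrow> j \<le> k \<Longrightarrow> [i..<k] = [i..<j] @ [j..<k]" for i j k :: nat
    using upt_add_eq_append[of i j "k - j"] by simp
  assume "u \<le> a" "a < b" "b \<le> n"
  then have "[u..<n] = [u..<a] @ [a..<b] @ [b..<n]"
    using upt3[of u a n] upt3[of a b n] by simp
  then show ?thesis by simp
qed

context
  fixes G :: "('v,'e) tollnet" and S0 :: "'e list" and xs :: "('e \<times> 'e list) list"
    and ups :: "'v \<Rightarrow> 'v \<Rightarrow> 'e list"
  assumes dec: "decb G S0 xs"
begin

lemma build_gen:
  "1 \<le> u \<Longrightarrow> u \<le> length xs + 1 \<Longrightarrow> sdl2 A \<Longrightarrow> (\<forall>p\<in>set A. snd p \<le> length xs + 1) \<Longrightarrow>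
   (A \<noteq> [] \<longrightarrow> u \<le> fst (hd A)) \<Longrightarrow>
   buildp G ups (S0 @ flatb xs) A (bef G (S0 @ flatb xs) u) =
   flatb (blocks1 G ups S0 xs A (filter (\<lambda>k. \<not> inW A k) [u..<length xs + 1]))"
proof (induction A arbitrary: u)
  case Nil
  have "buildp G ups (S0 @ flatb xs) [] (bef G (S0 @ flatb xs) u) = flatb (drop (u-1) xs)"
    using Nil dec_drop_bef[OF dec] by simp
  moreover have "blocks1 G ups S0 xs [] [u..<length xs + 1] = map (\<lambda>k. xs!(k-1)) [u..<length xs + 1]"
    unfolding blocks1_def Snew_def segb_def using Nil by (auto intro!: map_cong)
  moreover have "map (\<lambda>k. xs!(k-1)) [u..<length xs + 1] = drop (u-1) xs"
    using map_blocks[OF dec, of u "length xs + 1"] Nil by simp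
  ultimately show ?case by (simp add: inW_def)
next
  case (Cons p R)
  obtain a b where p: "p = (a,b)" by fastforce
  let ?m = "length xs"
  have ab: "u \<le> a" "a < b" "b \<le> ?m + 1" "sdl2 R" "R \<noteq> [] \<longrightarrow> b \<le> fst (hd R)"
    using Cons.prems p by (auto simp: sdl2_Cons)
  have Rge: "\<And>q. q \<in> set R \<Longrightarrow> b \<le> fst q" using sdl2_fst_ge[of p R] Cons.prems p by auto
  have Rlt: "\<And>q. q \<in> set R \<Longrightarrow> fst q < snd q"
  proof -
    fix q assume "q \<in> set R"
    then show "fst q < snd q" using \<open>sdl2 R\<close>
    proof (induction R)
      case (Cons r R) then show ?case by (cases "q = r") (auto simp: sdl2_Cons)
    qed simp
  qed
  have IH: "buildp G ups (S0 @ flatb xs) R (bef G (S0 @ flatb xs) b) =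
      flatb (blocks1 G ups S0 xs R (filter (\<lambda>k. \<not> inW R k) [b..<?m + 1]))"
    using Cons.IH[of b] ab Cons.prems by auto
  have mid: "drop (bef G (S0 @ flatb xs) u) (take (aft G (S0 @ flatb xs) a) (S0 @ flatb xs)) =
     flatb (take (a - u) (drop (u-1) xs)) @ [fst (xs!(a-1))]"
    using dec_mid[OF dec, of u a] ab Cons.prems by simp
  have f: "filter (\<lambda>k. \<not> inW (p # R) k) [u..<?m + 1] = [u..<a] @ [a] @ filter (\<lambda>k. \<not> inW R k) [b..<?m + 1]"
  proof -
    have nW: "\<not> inW (p # R) x" if "x \<le> a" for x
      unfolding inW_def
    proof
      assume "\<exists>q\<in>set (p # R). fst q < x \<and> x < snd q"
      then obtain q where q: "q \<in> set (p # R)" "fst q < x" by blast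
      show False
      proof (cases "q = p")
        case True then show False using q that p by simp
      next
        case False then have "q \<in> set R" using q by simp
        then show False using Rge[of q] q that ab by simp
      qed
    qed
    have "filter (\<lambda>k. \<not> inW (p # R) k) [u..<a] = [u..<a]"
      using nW by (intro filter_True) simp
    moreover have "filter (\<lambda>k. \<not> inW (p # R) k) [a..<b] = [a]"
    proof -
      have "[a..<b] = a # [a+1..<b]" using ab by (simp add: upt_conv_Cons)
      moreover have "\<not> inW (p # R) a" using nW by simp
      moreover have "filter (\<lambda>k. \<not> inW (p # R) k) [a+1..<b] = []"
        by (auto simp: filter_empty_conv inW_def p)
      ultimately show ?thesis by simp
    qed
    moreover have "filter (\<lambda>k. \<not> inW (p # R) k) [b..<?m+1] = filter (\<lambda>k. \<not> inW R k) [b..<?m+1]"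
      by (rule filter_cong) (auto simp: inW_def p)
    ultimately show ?thesis using filter_split3[of u a b "?m+1" "\<lambda>k. \<not> inW (p # R) k"] ab by simp
  qed
  have s1: "blocks1 G ups S0 xs (p # R) [u..<a] = map (\<lambda>k. xs!(k-1)) [u..<a]"
  proof -
    have "map_of (p # R) k = None" if "k \<in> set [u..<a]" for k
    proof -
      have "k \<notin> fst ` set (p # R)" using that Rge ab p by fastforce
      then show ?thesis by (simp add: map_of_eq_None_iff)
    qed
    then show ?thesis unfolding blocks1_def Snew_def segb_def using Cons.prems by (auto intro!: map_cong)
  qed
  have s2: "blocks1 G ups S0 xs (p # R) [a] = [(fst (xs!(a-1)), ups (TERMv G (S0 @ flatb xs) a) (INITv G (S0 @ flatb xs) b))]"
    by (simp add: blocks1_def Snew_def p)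
  have s3: "blocks1 G ups S0 xs (p # R) (filter (\<lambda>k. \<not> inW R k) [b..<?m + 1]) =
            blocks1 G ups S0 xs R (filter (\<lambda>k. \<not> inW R k) [b..<?m + 1])"
    unfolding blocks1_def Snew_def using ab by (auto intro!: map_cong simp: p)
  have "map (\<lambda>k. xs!(k-1)) [u..<a] = take (a - u) (drop (u-1) xs)"
    using map_blocks[OF dec, of u a] ab Cons.prems by simp
  have bl: "blocks1 G ups S0 xs A (X @ Y) = blocks1 G ups S0 xs A X @ blocks1 G ups S0 xs A Y" for A X Y
    by (simp add: blocks1_def)
  have "buildp G ups (S0 @ flatb xs) (p # R) (bef G (S0 @ flatb xs) u) =
     (flatb (take (a - u) (drop (u-1) xs)) @ [fst (xs!(a-1))]) @
     ups (TERMv G (S0 @ flatb xs) a) (INITv G (S0 @ flatb xs) b) @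
     flatb (blocks1 G ups S0 xs R (filter (\<lambda>k. \<not> inW R k) [b..<?m + 1]))"
    by (simp only: p buildp.simps mid IH)
  also have "\<dots> = flatb (blocks1 G ups S0 xs (p # R) [u..<a]) @ flatb (blocks1 G ups S0 xs (p # R) [a])
     @ flatb (blocks1 G ups S0 xs (p # R) (filter (\<lambda>k. \<not> inW R k) [b..<?m + 1]))"
    unfolding s1 s2 s3 \<open>map (\<lambda>k. xs!(k-1)) [u..<a] = _\<close> by simp
  also have "\<dots> = flatb (blocks1 G ups S0 xs (p # R) (filter (\<lambda>k. \<not> inW (p # R) k) [u..<?m + 1]))"
    unfolding f bl by simp
  finally show ?case .
qed

lemma build0:
  assumes A: "sdl2 A" "\<forall>p\<in>set A. snd p \<le> length xs + 1"
  shows "buildp G ups (S0 @ flatb xs) A 0 =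
   Snew G ups S0 xs A 0 @ flatb (blocks1 G ups S0 xs A (filter (\<lambda>k. \<not> inW A k) [1..<length xs + 1]))"
proof (cases A)
  case Nil
  have "blocks1 G ups S0 xs [] [1..<length xs + 1] = map (\<lambda>k. xs!(k-1)) [1..<length xs + 1]"
    unfolding blocks1_def Snew_def segb_def by (auto intro!: map_cong)
  moreover have "map (\<lambda>k. xs!(k-1)) [1..<length xs + 1] = xs"
    using map_blocks[OF dec, of 1 "length xs + 1"] by simp
  ultimately show ?thesis using Nil by (simp add: inW_def Snew_def segb_def)
next
  case (Cons p R)
  obtain a b where p: "p = (a,b)" by fastforce
  let ?P = "S0 @ flatb xs"
  let ?m = "length xs"
  have ab: "a < b" "b \<le> ?m + 1" "sdl2 R" "R \<noteq> [] \<longrightarrow> b \<le> fst (hd R)"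
    using A Cons p by (auto simp: sdl2_Cons)
  have Rge: "\<And>q. q \<in> set R \<Longrightarrow> b \<le> fst q" using sdl2_fst_ge[of p R] A Cons p by auto
  show ?thesis
  proof (cases "a = 0")
    case True
    have IH: "buildp G ups ?P R (bef G ?P b) = flatb (blocks1 G ups S0 xs R (filter (\<lambda>k. \<not> inW R k) [b..<?m + 1]))"
      using build_gen[of b R] ab A Cons True by auto
    have t0: "take (aft G ?P a) ?P = []" using True by (simp add: aft_def)
    have f: "filter (\<lambda>k. \<not> inW A k) [1..<?m + 1] = filter (\<lambda>k. \<not> inW R k) [b..<?m + 1]"
    proof -
      have "[1..<?m+1] = [1..<b] @ [b..<?m+1]"
        using upt_add_eq_append[of 1 b "?m + 1 - b"] ab True by simp
      moreover have "filter (\<lambda>k. \<not> inW A k) [1..<b] = []"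
        using True by (auto simp: filter_empty_conv inW_def Cons p)
      moreover have "filter (\<lambda>k. \<not> inW A k) [b..<?m+1] = filter (\<lambda>k. \<not> inW R k) [b..<?m+1]"
        by (rule filter_cong) (auto simp: inW_def Cons p)
      ultimately show ?thesis by simp
    qed
    have s3: "blocks1 G ups S0 xs A (filter (\<lambda>k. \<not> inW R k) [b..<?m + 1]) =
            blocks1 G ups S0 xs R (filter (\<lambda>k. \<not> inW R k) [b..<?m + 1])"
      unfolding blocks1_def Snew_def using ab True by (auto intro!: map_cong simp: Cons p)
    have sn: "Snew G ups S0 xs A 0 = ups (TERMv G ?P a) (INITv G ?P b)"
      using True by (simp add: Snew_def Cons p)
    show ?thesis unfolding f s3 sn using IH t0 by (simp add: Cons p)
  next
    case False
    have m0: "map_of A 0 = None"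
    proof -
      have "0 \<notin> fst ` set A" using Rge False ab Cons p by fastforce
      then show ?thesis by (simp add: map_of_eq_None_iff)
    qed
    have a1: "a \<le> ?m" using ab by simp
    have e: "take (aft G ?P a) ?P = S0 @ drop (bef G ?P 1) (take (aft G ?P a) ?P)"
      using dec_take_aft[OF dec a1] dec_mid[OF dec, of 1 a] False a1 by (simp del: drop_append take_append)
    have "buildp G ups ?P A 0 = S0 @ buildp G ups ?P A (bef G ?P 1)"
      unfolding Cons p buildp.simps drop_0 by (subst e) simp
    also have "\<dots> = S0 @ flatb (blocks1 G ups S0 xs A (filter (\<lambda>k. \<not> inW A k) [1..<?m + 1]))"
      using build_gen[of 1 A] A Cons p False by simp
    finally show ?thesis using m0 by (simp add: Snew_def segb_def)
  qed
qed

end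


lemma sdl2_nth_le: "sdl2 A \<Longrightarrow> i < j \<Longrightarrow> j < length A \<Longrightarrow> snd (A!i) \<le> fst (A!j)"
proof (induction A arbitrary: i j)
  case Nil then show ?case by simp
next
  case (Cons p R)
  have R: "sdl2 R" using Cons.prems by (simp add: sdl2_Cons)
  show ?case
  proof (cases i)
    case 0
    then obtain j' where j: "j = Suc j'" using Cons.prems by (cases j) auto
    have "R!j' \<in> set R" using Cons.prems j by simp
    then show ?thesis using sdl2_fst_ge[of p R] Cons.prems 0 j by simp
  next
    case (Suc i')
    then obtain j' where j: "j = Suc j'" using Cons.prems by (cases j) auto
    then show ?thesis using Cons.IH[OF R, of i' j'] Cons.prems Suc by simp
  qed
qed

lemma sdl2_lt: "sdl2 A \<Longrightarrow> p \<in> set A \<Longrightarrow> fst p < snd p"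
proof (induction A)
  case (Cons r R) then show ?case by (cases "p = r") (auto simp: sdl2_Cons)
qed simp

lemma sdl2_disj: "sdl2 A \<Longrightarrow> p \<in> set A \<Longrightarrow> q \<in> set A \<Longrightarrow> p \<noteq> q \<Longrightarrow> snd p \<le> fst q \<or> snd q \<le> fst p"
proof -
  assume A: "sdl2 A" "p \<in> set A" "q \<in> set A" "p \<noteq> q"
  obtain i j where ij: "i < length A" "j < length A" "A!i = p" "A!j = q" using A by (auto simp: in_set_conv_nth)
  then have "i \<noteq> j" using A by auto
  then show ?thesis using sdl2_nth_le[OF A(1), of i j] sdl2_nth_le[OF A(1), of j i] ij by (cases "i < j") auto
qed

lemma sorted_next:
  fixes L :: "nat list"
  assumes s: "sorted_wrt (<) L" and a: "a + 1 < length L" and y: "y \<in> set L" "L!a < y"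
    and m: "\<forall>x\<in>set L. L!a < x \<longrightarrow> y \<le> x"
  shows "L!(a+1) = y"
proof -
  have "L!a < L!(a+1)" using sorted_wrt_nth_less[OF s, of a "a+1"] a by simp
  then have "y \<le> L!(a+1)" using m a by auto
  obtain j where j: "j < length L" "L!j = y" using y by (auto simp: in_set_conv_nth)
  have "a < j"
  proof (rule ccontr)
    assume "\<not> a < j"
    then have "j \<le> a" by simp
    then have "L!j \<le> L!a" using sorted_wrt_nth_less[OF s, of j a] a by (cases "j = a") force+
    then show False using j y by simp
  qed
  then have "L!(a+1) \<le> L!j" using sorted_wrt_nth_less[OF s, of "a+1" j] j by (cases "a + 1 = j") force+
  then show ?thesis using \<open>y \<le> L!(a+1)\<close> j by simp
qed

definition Kl :: "(nat \<times> nat) list \<Rightarrow> nat \<Rightarrow> nat list" where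
  "Kl A m = filter (\<lambda>k. \<not> inW A k) [1..<m+1]"

definition kk :: "(nat \<times> nat) list \<Rightarrow> nat \<Rightarrow> nat \<Rightarrow> nat" where
  "kk A m a = ((0 # Kl A m) @ [m+1]) ! a"

context
  fixes A :: "(nat \<times> nat) list" and m :: nat
  assumes sd: "sdl2 A" and bnd: "\<forall>p\<in>set A. snd p \<le> m + 1"
begin

lemma L_sorted: "sorted_wrt (<) ((0 # Kl A m) @ [m+1])"
  unfolding Kl_def by (auto simp: sorted_wrt_append sorted_wrt_filter)

lemma L_set: "set ((0 # Kl A m) @ [m+1]) = {x. x \<le> m + 1 \<and> \<not> inW A x}"
proof
  show "set ((0 # Kl A m) @ [m+1]) \<subseteq> {x. x \<le> m + 1 \<and> \<not> inW A x}"
    using bnd unfolding Kl_def inW_def by auto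
  show "{x. x \<le> m + 1 \<and> \<not> inW A x} \<subseteq> set ((0 # Kl A m) @ [m+1])"
  proof
    fix x assume x: "x \<in> {x. x \<le> m + 1 \<and> \<not> inW A x}"
    show "x \<in> set ((0 # Kl A m) @ [m+1])"
    proof (cases "x = 0 \<or> x = m + 1")
      case True then show ?thesis by auto
    next
      case False then show ?thesis using x unfolding Kl_def by (simp del: upt_Suc)
    qed
  qed
qed

lemma L_mem: "x \<in> set ((0 # Kl A m) @ [m+1]) \<longleftrightarrow> x \<le> m + 1 \<and> \<not> inW A x"
  using L_set by blast

lemma L_len: "length ((0 # Kl A m) @ [m+1]) = length (Kl A m) + 2"
  by simp

lemma kk0: "kk A m 0 = 0"
  by (simp add: kk_def)

lemma kk_last: "kk A m (length (Kl A m) + 1) = m + 1"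
proof -
  have "length (0 # Kl A m) = length (Kl A m) + 1" by simp
  then show ?thesis unfolding kk_def by (metis nth_append_length)
qed

lemma kk_Suc: "1 \<le> a \<Longrightarrow> a \<le> length (Kl A m) \<Longrightarrow> kk A m a = Kl A m ! (a - 1)"
proof -
  assume a: "1 \<le> a" "a \<le> length (Kl A m)"
  then obtain a' where a': "a = Suc a'" by (cases a) auto
  have "((0 # Kl A m) @ [m+1]) ! a = (Kl A m @ [m+1]) ! a'" unfolding a' by simp
  also have "\<dots> = Kl A m ! a'" using a a' by (simp only: nth_append) simp
  finally show ?thesis unfolding kk_def a' by simp
qed

lemma kk_in: "a \<le> length (Kl A m) + 1 \<Longrightarrow> kk A m a \<le> m + 1 \<and> \<not> inW A (kk A m a)"
proof -
  assume a: "a \<le> length (Kl A m) + 1"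
  have "a < length ((0 # Kl A m) @ [m+1])" using a by simp
  then have "kk A m a \<in> set ((0 # Kl A m) @ [m+1])" unfolding kk_def by (rule nth_mem)
  then have "kk A m a \<in> {x. x \<le> m + 1 \<and> \<not> inW A x}" unfolding L_set .
  then show ?thesis by blast
qed

lemma kk_le_m: "a \<le> length (Kl A m) \<Longrightarrow> kk A m a \<le> m"
proof (cases a)
  case 0 then show ?thesis by (simp add: kk0)
next
  case (Suc a')
  assume a: "a \<le> length (Kl A m)"
  then have "Kl A m ! a' \<in> set (Kl A m)" using Suc by simp
  moreover have "set (Kl A m) \<subseteq> {1..m}" unfolding Kl_def by auto
  moreover have "kk A m a = Kl A m ! a'" using kk_Suc[of a] a Suc by simp
  ultimately show ?thesis by auto
qed

lemma kk_mono: "a < b \<Longrightarrow> b \<le> length (Kl A m) + 1 \<Longrightarrow> kk A m a < kk A m b"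
  unfolding kk_def using sorted_wrt_nth_less[OF L_sorted, of a b] by simp

lemma kk_next: "a \<le> length (Kl A m) \<Longrightarrow>
  kk A m (a+1) = (case map_of A (kk A m a) of Some b \<Rightarrow> b | None \<Rightarrow> kk A m a + 1)"
proof -
  assume a: "a \<le> length (Kl A m)"
  let ?L = "(0 # Kl A m) @ [m+1]"
  let ?k = "kk A m a"
  have kL: "?L ! a = ?k" by (simp add: kk_def)
  have knW: "\<not> inW A ?k" using kk_in[of a] a by simp
  have km: "?k \<le> m" using kk_le_m[OF a] .
  show ?thesis
  proof (cases "map_of A ?k")
    case None
    have "?L ! (a+1) = ?k + 1"
    proof (rule sorted_next[OF L_sorted])
      show "a + 1 < length ?L" using a by simp
      show "?L ! a < ?k + 1" using kL by simp
      show "\<forall>x\<in>set ?L. ?L ! a < x \<longrightarrow> ?k + 1 \<le> x" using kL by (metis Suc_eq_plus1 Suc_leI)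
      have "\<not> inW A (?k + 1)"
      proof
        assume "inW A (?k + 1)"
        then obtain q where q: "q \<in> set A" "fst q < ?k + 1" "?k + 1 < snd q" unfolding inW_def by auto
        show False
        proof (cases "fst q = ?k")
          case True
          then have "?k \<in> fst ` set A" using q by force
          then show False using None by (simp add: map_of_eq_None_iff)
        next
          case False
          then have "inW A ?k" using q unfolding inW_def by force
          then show False using knW by simp
        qed
      qed
      then show "?k + 1 \<in> set ?L" using L_mem[of "?k+1"] km by linarith
    qed
    then show ?thesis using None by (simp add: kk_def)
  next
    case (Some b)
    then have kb: "(?k, b) \<in> set A" by (rule map_of_SomeD)
    have "?L ! (a+1) = b"
    proof (rule sorted_next[OF L_sorted])
      show "a + 1 < length ?L" using a by simp
      show "?L ! a < b" using kL sdl2_lt[OF sd kb] by simp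
      show "\<forall>x\<in>set ?L. ?L ! a < x \<longrightarrow> b \<le> x"
      proof (intro ballI impI)
        fix x assume "x \<in> set ?L" "?L ! a < x"
        then have "\<not> inW A x" "?k < x" using L_mem[of x] kL by auto
        then show "b \<le> x" using kb unfolding inW_def by force
      qed
      have "\<not> inW A b"
      proof
        assume "inW A b"
        then obtain q where q: "q \<in> set A" "fst q < b" "b < snd q" unfolding inW_def by auto
        then have "q \<noteq> (?k, b)" by auto
        then have "b \<le> fst q \<or> snd q \<le> ?k" using sdl2_disj[OF sd kb q(1)] by simp
        then show False using q sdl2_lt[OF sd kb] by auto
      qed
      moreover have "b \<le> m + 1" using bnd kb by fastforce
      ultimately show "b \<in> set ?L" using L_mem[of b] by blast
    qed
    then show ?thesis using Some by (simp add: kk_def)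
  qed
qed

end


lemma Ufree_ups:
  assumes upsP: "\<And>Q. spath G (freeA G) u Q v \<Longrightarrow> spath G (freeA G) u (ups u v) v \<and> L0 G (ups u v) \<le> L0 G Q"
    and ex: "\<exists>Q. spath G (freeA G) u Q v"
  shows "Ufree G u v = ereal (L0 G (ups u v))"
proof -
  have sp: "spath G (freeA G) u (ups u v) v" using upsP ex by blast
  show ?thesis unfolding Ufree_def
  proof (rule antisym)
    show "Inf (ereal ` {L0 G Q |Q. spath G (freeA G) u Q v}) \<le> ereal (L0 G (ups u v))"
      by (rule Inf_lower) (use sp in auto)
    show "ereal (L0 G (ups u v)) \<le> Inf (ereal ` {L0 G Q |Q. spath G (freeA G) u Q v})"
      by (rule Inf_greatest) (use upsP in auto)
  qed
qed

definition gam :: "('v,'e) tollnet \<Rightarrow> ('e \<times> 'e list) list \<Rightarrow> nat \<Rightarrow> real" where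
  "gam G xs l = (if l = 0 then 0 else real (c G (fst (xs!(l-1)))))"

definition Ep :: "('v,'e) tollnet \<Rightarrow> 'e list \<Rightarrow> ('e \<times> 'e list) list \<Rightarrow> nat \<Rightarrow> real" where
  "Ep G S0 xs j = (\<Sum>l<j. L0 G (segb S0 xs l) + gam G xs l)"

lemma L0_toll: "e \<in> tollA G \<Longrightarrow> arc_cost G (\<lambda>_. 0) e = real (c G e)"
  by (simp add: arc_cost_def)

lemma Ep_L0: "decb G S0 xs \<Longrightarrow> L0 G (S0 @ flatb xs) = Ep G S0 xs (length xs + 1)"
proof (induction xs rule: rev_induct)
  case Nil then show ?case by (simp add: Ep_def segb_def gam_def)
next
  case (snoc x xs)
  have d: "decb G S0 xs" "fst x \<in> tollA G" using snoc.prems by (auto simp: decb_def)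
  have sg: "segb S0 (xs @ [x]) l = segb S0 xs l" "gam G (xs @ [x]) l = gam G xs l" if "l \<le> length xs" for l
    using that by (auto simp: segb_def gam_def nth_append)
  have "Ep G S0 (xs @ [x]) (length (xs @ [x]) + 1) = Ep G S0 (xs @ [x]) (length xs + 1) + L0 G (snd x) + real (c G (fst x))"
    by (simp add: Ep_def segb_def gam_def)
  also have "Ep G S0 (xs @ [x]) (length xs + 1) = Ep G S0 xs (length xs + 1)"
    unfolding Ep_def using sg by (intro sum.cong) auto
  finally show ?case using snoc.IH[OF d(1)] d(2) by (simp add: L0_append L0_Cons L0_toll)
qed

lemma Ep_diff: "i \<le> j \<Longrightarrow> Ep G S0 xs j - Ep G S0 xs i = (\<Sum>l\<in>{i..<j}. L0 G (segb S0 xs l) + gam G xs l)"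
proof -
  assume "i \<le> j"
  then have "(\<Sum>l\<in>{0..<i}. L0 G (segb S0 xs l) + gam G xs l) + (\<Sum>l\<in>{i..<j}. L0 G (segb S0 xs l) + gam G xs l)
     = (\<Sum>l\<in>{0..<j}. L0 G (segb S0 xs l) + gam G xs l)"
    by (intro sum.atLeastLessThan_concat) auto
  then show ?thesis unfolding Ep_def by (simp add: atLeast0LessThan)
qed

lemma Lij_Ep:
  assumes dec: "decb G S0 xs"
    and tight: "\<forall>k\<le>length xs. Uij G (S0 @ flatb xs) k (k+1) = ereal (L0 G (segb S0 xs k))"
    and ij: "i < j" "j \<le> length xs + 1"
  shows "Lij G (S0 @ flatb xs) i j = ereal (Ep G S0 xs j - Ep G S0 xs i - gam G xs i)"
proof -
  have "(\<Sum>l\<in>{i..<j}. Uij G (S0 @ flatb xs) l (l + 1)) = (\<Sum>l\<in>{i..<j}. ereal (L0 G (segb S0 xs l)))"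
    using tight ij by (intro sum.cong) auto
  also have "\<dots> = ereal (\<Sum>l\<in>{i..<j}. L0 G (segb S0 xs l))" by (rule sum_ereal)
  finally have s1: "(\<Sum>l\<in>{i..<j}. Uij G (S0 @ flatb xs) l (l + 1)) = ereal (\<Sum>l\<in>{i..<j}. L0 G (segb S0 xs l))" .
  have s2: "(\<Sum>l\<in>{i+1..<j}. real (c G (tau G (S0 @ flatb xs) l))) = (\<Sum>l\<in>{i+1..<j}. gam G xs l)"
    using ij dec_tau[OF dec] by (intro sum.cong) (auto simp: gam_def)
  have s3: "(\<Sum>l\<in>{i..<j}. gam G xs l) = gam G xs i + (\<Sum>l\<in>{i+1..<j}. gam G xs l)"
    using ij by (simp add: sum.atLeast_Suc_lessThan)
  show ?thesis unfolding Lij_def s1 s2 using Ep_diff[of i j G S0 xs] ij s3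
    by (simp add: sum.distrib)
qed


definition FW :: "(nat \<times> nat) list \<Rightarrow> (nat \<Rightarrow> real) \<Rightarrow> nat \<Rightarrow> real" where
  "FW B tt y = (\<Sum>x<y. if inW B x then tt x else 0)"

lemma FW_diff: "i \<le> j \<Longrightarrow> FW B tt j - FW B tt i = (\<Sum>x\<in>{i..<j}. if inW B x then tt x else 0)"
proof -
  assume "i \<le> j"
  then have "(\<Sum>x\<in>{0..<i}. if inW B x then tt x else 0) + (\<Sum>x\<in>{i..<j}. if inW B x then tt x else 0)
     = (\<Sum>x\<in>{0..<j}. if inW B x then tt x else 0)"
    by (intro sum.atLeastLessThan_concat) auto
  then show ?thesis unfolding FW_def by (simp add: atLeast0LessThan)
qed

context
  fixes G :: "('v,'e) tollnet" and S0 :: "'e list" and xs :: "('e \<times> 'e list) list"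
    and ups :: "'v \<Rightarrow> 'v \<Rightarrow> 'e list" and A :: "(nat \<times> nat) list" and t :: "nat \<Rightarrow> real"
  assumes dec: "decb G S0 xs"
    and disj: "tollA G \<inter> freeA G = {}"
    and upsP: "\<And>u v Q. spath G (freeA G) u Q v \<Longrightarrow> spath G (freeA G) u (ups u v) v \<and> L0 G (ups u v) \<le> L0 G Q"
    and sd: "sdl2 A"
    and bnd: "\<forall>p\<in>set A. snd p \<le> length xs + 1"
    and pth: "\<forall>p\<in>set A. \<exists>Q. spath G (freeA G) (TERMv G (S0 @ flatb xs) (fst p)) Q (INITv G (S0 @ flatb xs) (snd p))"
    and Dp: "\<forall>p\<in>set A. ereal (ssum t (fst p) (snd p)) = Dd G (S0 @ flatb xs) (fst p) (snd p)"
    and Cn: "\<forall>i j. i < j \<and> j \<le> length xs + 1 \<longrightarrow> ereal (ssum t i j) \<le> Dd G (S0 @ flatb xs) i j"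
    and tnn: "\<forall>l. 0 \<le> t l"
    and tight: "\<forall>k\<le>length xs. Uij G (S0 @ flatb xs) k (k+1) = ereal (L0 G (segb S0 xs k))"
begin

abbreviation "PP \<equiv> S0 @ flatb xs"
abbreviation "mm \<equiv> length xs"
abbreviation "KK \<equiv> Kl A (length xs)"
abbreviation "S1 \<equiv> Snew G ups S0 xs A 0"
abbreviation "xs1 \<equiv> blocks1 G ups S0 xs A (Kl A (length xs))"
abbreviation "k1 \<equiv> kk A (length xs)"

lemma KK_range: "k \<in> set KK \<Longrightarrow> 1 \<le> k \<and> k \<le> mm"
  unfolding Kl_def by auto

lemma ups_free: "p \<in> set A \<Longrightarrow> freel G (ups (TERMv G PP (fst p)) (INITv G PP (snd p)))"
proof -
  assume p: "p \<in> set A"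
  then have "spath G (freeA G) (TERMv G PP (fst p)) (ups (TERMv G PP (fst p)) (INITv G PP (snd p))) (INITv G PP (snd p))"
    using pth upsP by blast
  then show ?thesis using disj unfolding spath_def freel_def by auto
qed

lemma Snew_free: "k \<le> mm \<Longrightarrow> freel G (Snew G ups S0 xs A k)"
proof (cases "map_of A k")
  case None
  assume k: "k \<le> mm"
  then show ?thesis using None dec unfolding Snew_def segb_def decb_def
    by (cases k) (auto simp: nth_mem)
next
  case (Some b)
  then have "(k, b) \<in> set A" by (rule map_of_SomeD)
  then show ?thesis using Some ups_free[of "(k,b)"] by (simp add: Snew_def)
qed

lemma dec1: "decb G S1 xs1"
  unfolding decb_def blocks1_def
proof (intro conjI ballI)
  show "freel G S1" using Snew_free[of 0] by simp
  fix p assume "p \<in> set (map (\<lambda>k. (fst (xs!(k-1)), Snew G ups S0 xs A k)) KK)"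
  then obtain k where k: "k \<in> set KK" "p = (fst (xs!(k-1)), Snew G ups S0 xs A k)" by auto
  then have "1 \<le> k" "k \<le> mm" using KK_range by auto
  then have "xs!(k-1) \<in> set xs" by simp
  then show "fst p \<in> tollA G" using dec k unfolding decb_def by auto
  show "freel G (snd p)" using k Snew_free \<open>k \<le> mm\<close> by simp
qed

lemma len1: "length xs1 = length KK"
  by (simp add: blocks1_def)

lemma ntoll1: "ntoll G (S1 @ flatb xs1) = length KK"
  using dec_ntoll[OF dec1] len1 by simp

lemma k1_ge1: "1 \<le> a \<Longrightarrow> a \<le> length KK + 1 \<Longrightarrow> 1 \<le> k1 a"
  using kk_mono[OF sd bnd, of 0 a] kk0[OF sd bnd] by simp

lemma tau1: "1 \<le> a \<Longrightarrow> a \<le> length KK \<Longrightarrow> tau G (S1 @ flatb xs1) a = tau G PP (k1 a)"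
proof -
  assume a: "1 \<le> a" "a \<le> length KK"
  have "tau G (S1 @ flatb xs1) a = fst (xs1 ! (a-1))" using dec_tau[OF dec1] a len1 by simp
  also have "\<dots> = fst (xs ! (KK ! (a-1) - 1))" using a by (simp add: blocks1_def)
  also have "KK ! (a-1) = k1 a" using kk_Suc[OF sd bnd a] by simp
  also have "fst (xs ! (k1 a - 1)) = tau G PP (k1 a)"
    using dec_tau[OF dec, of "k1 a"] k1_ge1[of a] kk_le_m[OF sd bnd, of a] a by simp
  finally show ?thesis .
qed

lemma TERM1: "a \<le> length KK \<Longrightarrow> TERMv G (S1 @ flatb xs1) a = TERMv G PP (k1 a)"
proof (cases "a = 0")
  case True then show ?thesis by (simp add: TERMv_def kk0[OF sd bnd])
next
  case False
  assume a: "a \<le> length KK"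
  then show ?thesis using False tau1[of a] k1_ge1[of a] by (simp add: TERMv_def)
qed

lemma INIT1: "1 \<le> b \<Longrightarrow> b \<le> length KK + 1 \<Longrightarrow> INITv G (S1 @ flatb xs1) b = INITv G PP (k1 b)"
proof (cases "b = length KK + 1")
  case True then show ?thesis using ntoll1 kk_last[OF sd bnd] dec_ntoll[OF dec] by (simp add: INITv_def)
next
  case False
  assume b: "1 \<le> b" "b \<le> length KK + 1"
  then have b': "b \<le> length KK" using False by simp
  have "k1 b \<le> mm" using kk_le_m[OF sd bnd b'] .
  then show ?thesis using False b' b tau1[of b] ntoll1 dec_ntoll[OF dec] by (simp add: INITv_def)
qed

lemma U1: "a \<le> length KK \<Longrightarrow> 1 \<le> b \<Longrightarrow> b \<le> length KK + 1 \<Longrightarrow>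
   Uij G (S1 @ flatb xs1) a b = Uij G PP (k1 a) (k1 b)"
  by (simp add: Uij_def TERM1 INIT1)

lemma seg1: "a \<le> length KK \<Longrightarrow> segb S1 xs1 a = Snew G ups S0 xs A (k1 a)"
proof (cases "a = 0")
  case True then show ?thesis by (simp add: segb_def kk0[OF sd bnd])
next
  case False
  assume a: "a \<le> length KK"
  then show ?thesis using False kk_Suc[OF sd bnd, of a] by (simp add: segb_def blocks1_def)
qed

lemma gam1: "a \<le> length KK \<Longrightarrow> gam G xs1 a = gam G xs (k1 a)"
proof (cases "a = 0")
  case True then show ?thesis by (simp add: gam_def kk0[OF sd bnd])
next
  case False
  assume a: "a \<le> length KK"
  then have "1 \<le> k1 a" using k1_ge1[of a] False by simp
  then show ?thesis using a False kk_Suc[OF sd bnd, of a] by (simp add: gam_def blocks1_def)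
qed


lemma tight1: "a \<le> length KK \<Longrightarrow> Uij G (S1 @ flatb xs1) a (a+1) = ereal (L0 G (segb S1 xs1 a))"
proof -
  assume a: "a \<le> length KK"
  let ?k = "k1 a"
  have u: "Uij G (S1 @ flatb xs1) a (a+1) = Uij G PP ?k (k1 (a+1))" using U1[of a "a+1"] a by simp
  have km: "?k \<le> mm" using kk_le_m[OF sd bnd a] .
  show ?thesis
  proof (cases "map_of A ?k")
    case None
    then have "k1 (a+1) = ?k + 1" using kk_next[OF sd bnd a] by simp
    then show ?thesis using u seg1[OF a] None tight km by (simp add: Snew_def)
  next
    case (Some b)
    then have kb: "(?k, b) \<in> set A" by (rule map_of_SomeD)
    have "k1 (a+1) = b" using kk_next[OF sd bnd a] Some by simp
    moreover have "Uij G PP ?k b = ereal (L0 G (ups (TERMv G PP ?k) (INITv G PP b)))"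
      unfolding Uij_def using bspec[OF pth kb] by (intro Ufree_ups upsP) auto
    ultimately show ?thesis using u seg1[OF a] Some by (simp add: Snew_def)
  qed
qed

lemma Ep_Suc: "Ep G S0' xs' (Suc a) = Ep G S0' xs' a + L0 G (segb S0' xs' a) + gam G xs' a"
  by (simp add: Ep_def)

lemma Ep1: "a \<le> length KK + 1 \<Longrightarrow> Ep G S1 xs1 a = Ep G S0 xs (k1 a) + FW A t (k1 a)"
proof (induction a)
  case 0 then show ?case by (simp add: Ep_def FW_def kk0[OF sd bnd])
next
  case (Suc a)
  then have a: "a \<le> length KK" by simp
  let ?k = "k1 a"
  have km: "?k \<le> mm" using kk_le_m[OF sd bnd a] .
  have knW: "\<not> inW A ?k" using kk_in[OF sd bnd, of a] a by simp
  have IH: "Ep G S1 xs1 a = Ep G S0 xs ?k + FW A t ?k" using Suc by simp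
  have "Ep G S1 xs1 (Suc a) = Ep G S0 xs ?k + FW A t ?k + L0 G (Snew G ups S0 xs A ?k) + gam G xs ?k"
    using IH seg1[OF a] gam1[OF a] by (simp add: Ep_Suc)
  also have "\<dots> = Ep G S0 xs (k1 (Suc a)) + FW A t (k1 (Suc a))"
  proof (cases "map_of A ?k")
    case None
    then have n: "k1 (Suc a) = ?k + 1" using kk_next[OF sd bnd a] by simp
    have "FW A t (?k + 1) = FW A t ?k" using knW by (simp add: FW_def)
    then show ?thesis using None n by (simp add: Snew_def Ep_Suc)
  next
    case (Some b)
    then have kb: "(?k, b) \<in> set A" by (rule map_of_SomeD)
    have n: "k1 (Suc a) = b" using kk_next[OF sd bnd a] Some by simp
    have kb2: "?k < b" "b \<le> mm + 1" using sdl2_lt[OF sd kb] bnd kb by auto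
    have U: "Uij G PP ?k b = ereal (L0 G (ups (TERMv G PP ?k) (INITv G PP b)))"
      unfolding Uij_def using bspec[OF pth kb] by (intro Ufree_ups upsP) auto
    have L: "Lij G PP ?k b = ereal (Ep G S0 xs b - Ep G S0 xs ?k - gam G xs ?k)"
      using Lij_Ep[OF dec tight kb2] .
    have "ereal (ssum t ?k b) = Dd G PP ?k b" using Dp kb by auto
    then have e: "L0 G (ups (TERMv G PP ?k) (INITv G PP b)) = ssum t ?k b + (Ep G S0 xs b - Ep G S0 xs ?k - gam G xs ?k)"
      unfolding Dd_def U L by simp
    have "FW A t b - FW A t ?k = (\<Sum>x\<in>{?k..<b}. if inW A x then t x else 0)"
      using FW_diff kb2 by simp
    also have "\<dots> = (\<Sum>x\<in>{?k+1..<b}. if inW A x then t x else 0)"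
      using kb2 knW by (simp add: sum.atLeast_Suc_lessThan)
    also have "\<dots> = ssum t ?k b" unfolding ssum_def
      using kb by (intro sum.cong) (auto simp: inW_def)
    finally have "FW A t b = FW A t ?k + ssum t ?k b" by simp
    then show ?thesis using Some n e by (simp add: Snew_def)
  qed
  finally show ?case .
qed

lemma L0_P1: "L0 G (S1 @ flatb xs1) = L0 G PP + FW A t (mm + 1)"
  using Ep_L0[OF dec1] Ep_L0[OF dec] Ep1[of "length KK + 1"] kk_last[OF sd bnd] len1 by simp

lemma dnn1: "a < b \<Longrightarrow> b \<le> length KK + 1 \<Longrightarrow> Lij G (S1 @ flatb xs1) a b \<le> Uij G (S1 @ flatb xs1) a b"
proof -
  assume ab: "a < b" "b \<le> length KK + 1"
  let ?ka = "k1 a" and ?kb = "k1 b"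
  have kab: "?ka < ?kb" "?kb \<le> mm + 1" using kk_mono[OF sd bnd ab] kk_in[OF sd bnd ab(2)] by auto
  have knW: "\<not> inW A ?ka" using kk_in[OF sd bnd, of a] ab by simp
  have t1: "\<forall>k\<le>length xs1. Uij G (S1 @ flatb xs1) k (k+1) = ereal (L0 G (segb S1 xs1 k))"
    using tight1 len1 by simp
  have "Lij G (S1 @ flatb xs1) a b = ereal (Ep G S1 xs1 b - Ep G S1 xs1 a - gam G xs1 a)"
    using Lij_Ep[OF dec1 t1 ab(1)] ab len1 by simp
  also have "\<dots> = ereal ((Ep G S0 xs ?kb - Ep G S0 xs ?ka - gam G xs ?ka) + (FW A t ?kb - FW A t ?ka))"
    using Ep1[of a] Ep1[of b] gam1[of a] ab by simp
  also have "\<dots> \<le> ereal ((Ep G S0 xs ?kb - Ep G S0 xs ?ka - gam G xs ?ka) + ssum t ?ka ?kb)"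
  proof -
    have "FW A t ?kb - FW A t ?ka = (\<Sum>x\<in>{?ka..<?kb}. if inW A x then t x else 0)"
      using FW_diff kab by simp
    also have "\<dots> = (\<Sum>x\<in>{?ka+1..<?kb}. if inW A x then t x else 0)"
      using kab knW by (simp add: sum.atLeast_Suc_lessThan)
    also have "\<dots> \<le> ssum t ?ka ?kb" unfolding ssum_def
      using tnn by (intro sum_mono) auto
    finally show ?thesis by simp
  qed
  also have "\<dots> \<le> Uij G PP ?ka ?kb"
  proof -
    have "ereal (ssum t ?ka ?kb) \<le> Dd G PP ?ka ?kb" using Cn kab by blast
    moreover have "Lij G PP ?ka ?kb = ereal (Ep G S0 xs ?kb - Ep G S0 xs ?ka - gam G xs ?ka)"
      using Lij_Ep[OF dec tight kab] .
    ultimately show ?thesis unfolding Dd_def by (cases "Uij G PP ?ka ?kb") auto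
  qed
  also have "\<dots> = Uij G (S1 @ flatb xs1) a b" using U1[of a b] ab by simp
  finally show ?thesis .
qed


lemma lenKK: "length KK = card {x\<in>{1..<mm+1}. \<not> inW A x}"
proof -
  have "distinct KK" unfolding Kl_def by simp
  then have "length KK = card (set KK)" by (simp add: distinct_card)
  moreover have "set KK = {x\<in>{1..<mm+1}. \<not> inW A x}" unfolding Kl_def by auto
  ultimately show ?thesis by simp
qed

end


lemma FW_sum: "sdl2 B \<Longrightarrow> \<forall>p\<in>set B. snd p \<le> n \<Longrightarrow>
  FW B tt n = sum_list (map (\<lambda>p. ssum tt (fst p) (snd p)) B)"
proof (induction B)
  case Nil then show ?case by (simp add: FW_def inW_def)
next
  case (Cons p R)
  have R: "sdl2 R" using Cons.prems by (simp add: sdl2_Cons)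
  have Rge: "\<And>q. q \<in> set R \<Longrightarrow> snd p \<le> fst q" using sdl2_fst_ge[of p R] Cons.prems by auto
  have split: "(if inW (p # R) x then tt x else 0) =
      (if fst p < x \<and> x < snd p then tt x else 0) + (if inW R x then tt x else 0)" for x
  proof (cases "fst p < x \<and> x < snd p")
    case True
    then have "\<not> inW R x" using Rge unfolding inW_def by force
    moreover have "inW (p # R) x" using True unfolding inW_def by auto
    ultimately show ?thesis using True by simp
  next
    case False
    then have "inW (p # R) x \<longleftrightarrow> inW R x" unfolding inW_def by auto
    then show ?thesis using False by auto
  qed
  have "FW (p # R) tt n = (\<Sum>x<n. if fst p < x \<and> x < snd p then tt x else 0) + FW R tt n"
    unfolding FW_def split by (simp add: sum.distrib)
  moreover have "(\<Sum>x<n. if fst p < x \<and> x < snd p then tt x else 0) = ssum tt (fst p) (snd p)"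
  proof -
    have "(\<Sum>x<n. if fst p < x \<and> x < snd p then tt x else 0) = sum tt {x\<in>{..<n}. fst p < x \<and> x < snd p}"
      by (rule sum.inter_filter[symmetric]) simp
    also have "{x\<in>{..<n}. fst p < x \<and> x < snd p} = {fst p + 1..<snd p}" using Cons.prems by auto
    finally show ?thesis by (simp add: ssum_def)
  qed
  ultimately show ?case using Cons.IH[OF R] Cons.prems by simp
qed


declare alpha.simps[simp del]

lemma alpha_le1: "k \<le> 1 \<Longrightarrow> alpha k = 1"
  by (subst alpha.simps) simp

lemma alpha_big: "2 \<le> k \<Longrightarrow> alpha k = (1/2) * Max (set (map (\<lambda>(i, j). 1 + alpha i + alpha j)
        [(i, j). i \<leftarrow> [1..<k], j \<leftarrow> [i..<k], i + j \<le> k]))"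
  by (subst alpha.simps) simp

lemma alpha_set_I: "0 < i \<Longrightarrow> i \<le> j \<Longrightarrow> j < k \<Longrightarrow> i + j \<le> k \<Longrightarrow>
   1 + alpha i + alpha j \<in> set (map (\<lambda>(i, j). 1 + alpha i + alpha j)
        [(i, j). i \<leftarrow> [1..<k], j \<leftarrow> [i..<k], i + j \<le> k])"
proof -
  assume ij: "0 < i" "i \<le> j" "j < k" "i + j \<le> k"
  have "(i,j) \<in> set [(i, j). i \<leftarrow> [1..<k], j \<leftarrow> [i..<k], i + j \<le> k]" using ij by auto
  then have "(\<lambda>(i, j). 1 + alpha i + alpha j) (i,j) \<in> set (map (\<lambda>(i, j). 1 + alpha i + alpha j)
        [(i, j). i \<leftarrow> [1..<k], j \<leftarrow> [i..<k], i + j \<le> k])" by (simp only: set_map) (rule imageI)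
  then show ?thesis by simp
qed

lemma alpha_set_D: "x \<in> set (map (\<lambda>(i, j). 1 + alpha i + alpha j)
        [(i, j). i \<leftarrow> [1..<k], j \<leftarrow> [i..<k], i + j \<le> k]) \<Longrightarrow>
   (\<exists>i j. 0 < i \<and> i \<le> j \<and> j < k \<and> i + j \<le> k \<and> x = 1 + alpha i + alpha j)"
proof -
  assume "x \<in> set (map (\<lambda>(i, j). 1 + alpha i + alpha j)
        [(i, j). i \<leftarrow> [1..<k], j \<leftarrow> [i..<k], i + j \<le> k])"
  then obtain p where p: "p \<in> set [(i, j). i \<leftarrow> [1..<k], j \<leftarrow> [i..<k], i + j \<le> k]"
    "x = (\<lambda>(i, j). 1 + alpha i + alpha j) p" by auto
  obtain i j where "p = (i,j)" by fastforce
  then have "i \<in> set [1..<k]" "j \<in> set [i..<k]" "i + j \<le> k" "x = 1 + alpha i + alpha j"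
    using p by (auto split: if_splits)
  then show ?thesis by (intro exI[of _ i] exI[of _ j]) auto
qed

lemma alpha_pair: "0 < i \<Longrightarrow> i \<le> j \<Longrightarrow> j < k \<Longrightarrow> i + j \<le> k \<Longrightarrow> 1 + alpha i + alpha j \<le> 2 * alpha k"
proof -
  assume ij: "0 < i" "i \<le> j" "j < k" "i + j \<le> k"
  then have k: "2 \<le> k" by simp
  have "1 + alpha i + alpha j \<in> set (map (\<lambda>(i, j). 1 + alpha i + alpha j)
        [(i, j). i \<leftarrow> [1..<k], j \<leftarrow> [i..<k], i + j \<le> k])"
    using alpha_set_I ij by blast
  then have "1 + alpha i + alpha j \<le> Max (set (map (\<lambda>(i, j). 1 + alpha i + alpha j)
        [(i, j). i \<leftarrow> [1..<k], j \<leftarrow> [i..<k], i + j \<le> k]))"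
    by (intro Max_ge) auto
  then show ?thesis using alpha_big[OF k] by simp
qed

lemma alpha_ge1: "1 \<le> alpha k"
proof (induction k rule: less_induct)
  case (less k)
  show ?case
  proof (cases "k \<le> 1")
    case True then show ?thesis by (simp add: alpha_le1)
  next
    case False
    then have "1 + alpha 1 + alpha 1 \<le> 2 * alpha k" by (intro alpha_pair) auto
    then show ?thesis by (simp add: alpha_le1)
  qed
qed

lemma alpha_Suc: "alpha k \<le> alpha (Suc k)"
proof (cases "k \<le> 1")
  case True then show ?thesis using alpha_ge1[of "Suc k"] by (simp add: alpha_le1)
next
  case False
  then have k: "2 \<le> k" by simp
  have "Max (set (map (\<lambda>(i, j). 1 + alpha i + alpha j)
        [(i, j). i \<leftarrow> [1..<k], j \<leftarrow> [i..<k], i + j \<le> k])) \<le> 2 * alpha (Suc k)"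
  proof (rule Max.boundedI)
    show "finite (set (map (\<lambda>(i, j). 1 + alpha i + alpha j)
        [(i, j). i \<leftarrow> [1..<k], j \<leftarrow> [i..<k], i + j \<le> k]))" by simp
    have "1 + alpha 1 + alpha 1 \<in> set (map (\<lambda>(i, j). 1 + alpha i + alpha j)
        [(i, j). i \<leftarrow> [1..<k], j \<leftarrow> [i..<k], i + j \<le> k])"
      by (rule alpha_set_I) (use k in auto)
    then show "set (map (\<lambda>(i, j). 1 + alpha i + alpha j)
        [(i, j). i \<leftarrow> [1..<k], j \<leftarrow> [i..<k], i + j \<le> k]) \<noteq> {}" by (metis empty_iff)
    fix x assume "x \<in> set (map (\<lambda>(i, j). 1 + alpha i + alpha j)
        [(i, j). i \<leftarrow> [1..<k], j \<leftarrow> [i..<k], i + j \<le> k])"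
    then obtain i j where "0 < i" "i \<le> j" "j < k" "i + j \<le> k" "x = 1 + alpha i + alpha j"
      using alpha_set_D by blast
    then show "x \<le> 2 * alpha (Suc k)" using alpha_pair[of i j "Suc k"] by simp
  qed
  then show ?thesis using alpha_big[OF k] by simp
qed

lemma alpha_mono: "k \<le> k' \<Longrightarrow> alpha k \<le> alpha k'"
proof (induction k' rule: dec_induct)
  case base then show ?case by simp
next
  case (step n) then show ?case using alpha_Suc[of n] by simp
qed

lemma alpha_comb: "2 \<le> m \<Longrightarrow> m1 < m \<Longrightarrow> m2 < m \<Longrightarrow> m1 + m2 \<le> m \<Longrightarrow>
   1 + alpha m1 + alpha m2 \<le> 2 * alpha m"
proof -
  have main: "1 + alpha a + alpha b \<le> 2 * alpha m" if ab: "2 \<le> m" "a \<le> b" "b < m" "a + b \<le> m" for a b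
  proof (cases "a = 0")
    case False then show ?thesis using alpha_pair[of a b m] ab by simp
  next
    case True
    have "1 + alpha 1 + alpha (m - 1) \<le> 2 * alpha m" using ab by (intro alpha_pair) auto
    moreover have "alpha b \<le> alpha (m - 1)" using ab by (intro alpha_mono) simp
    ultimately show ?thesis using True by (simp add: alpha_le1)
  qed
  assume a: "2 \<le> m" "m1 < m" "m2 < m" "m1 + m2 \<le> m"
  show ?thesis
  proof (cases "m1 \<le> m2")
    case True then show ?thesis using main[of m1 m2] a by simp
  next
    case False then show ?thesis using main[of m2 m1] a by simp
  qed
qed


definition goodd :: "('v,'e) tollnet \<Rightarrow> 'e list \<Rightarrow> ('e \<times> 'e list) list \<Rightarrow> bool" where
  "goodd G S0 xs \<longleftrightarrow> decb G S0 xs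
     \<and> (\<forall>k\<le>length xs. Uij G (S0 @ flatb xs) k (k+1) = ereal (L0 G (segb S0 xs k)))
     \<and> (\<forall>i j. i < j \<and> j \<le> length xs + 1 \<longrightarrow> Lij G (S0 @ flatb xs) i j \<le> Uij G (S0 @ flatb xs) i j)"

lemma explore_ge_VP: "VP G P \<le> explore G ups n P"
  by (cases n) auto

lemma Ufree_ex: "Ufree G u v \<noteq> \<infinity> \<Longrightarrow> \<exists>Q. spath G (freeA G) u Q v"
  unfolding Ufree_def by (auto simp: top_ereal_def[symmetric])

lemma sdl_sdl2: "sdl X \<Longrightarrow> (\<forall>p\<in>set X. fst p < snd p) \<Longrightarrow> sdl2 X"
  by (induction X rule: sdl.induct) auto

lemma U0_eq: "Uij G P 0 (ntoll G P + 1) = Ufree G (src G) (snk G)"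
  by (simp add: Uij_def TERMv_def INITv_def)

lemma child:
  fixes G :: "('v,'e) tollnet" and S0 :: "'e list" and xs :: "('e \<times> 'e list) list"
    and ups :: "'v \<Rightarrow> 'v \<Rightarrow> 'e list" and A :: "(nat \<times> nat) list" and t :: "nat \<Rightarrow> real"
  assumes dec: "decb G S0 xs"
    and disj: "tollA G \<inter> freeA G = {}"
    and upsP: "\<And>u v Q. spath G (freeA G) u Q v \<Longrightarrow> spath G (freeA G) u (ups u v) v \<and> L0 G (ups u v) \<le> L0 G Q"
    and sd: "sdl2 A"
    and bnd: "\<forall>p\<in>set A. snd p \<le> length xs + 1"
    and pth: "\<forall>p\<in>set A. \<exists>Q. spath G (freeA G) (TERMv G (S0 @ flatb xs) (fst p)) Q (INITv G (S0 @ flatb xs) (snd p))"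
    and Dp: "\<forall>p\<in>set A. ereal (ssum t (fst p) (snd p)) = Dd G (S0 @ flatb xs) (fst p) (snd p)"
    and Cn: "\<forall>i j. i < j \<and> j \<le> length xs + 1 \<longrightarrow> ereal (ssum t i j) \<le> Dd G (S0 @ flatb xs) i j"
    and tnn: "\<forall>l. 0 \<le> t l"
    and tight: "\<forall>k\<le>length xs. Uij G (S0 @ flatb xs) k (k+1) = ereal (L0 G (segb S0 xs k))"
  defines "Sc \<equiv> Snew G ups S0 xs A 0" and "xsc \<equiv> blocks1 G ups S0 xs A (Kl A (length xs))"
  shows "goodd G Sc xsc \<and> buildp G ups (S0 @ flatb xs) A 0 = Sc @ flatb xsc
     \<and> L0 G (Sc @ flatb xsc) = L0 G (S0 @ flatb xs) + sum_list (map (\<lambda>p. ssum t (fst p) (snd p)) A)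
     \<and> length xsc = card {x\<in>{1..<length xs+1}. \<not> inW A x}"
proof -
  note ctx = dec disj upsP sd bnd pth Dp Cn tnn tight
  have l1: "length xsc = length (Kl A (length xs))" unfolding xsc_def by (rule len1[OF ctx])
  have g: "goodd G Sc xsc" unfolding goodd_def
  proof (intro conjI allI impI)
    show "decb G Sc xsc" unfolding Sc_def xsc_def by (rule dec1[OF ctx])
    show "Uij G (Sc @ flatb xsc) k (k + 1) = ereal (L0 G (segb Sc xsc k))" if "k \<le> length xsc" for k
      unfolding Sc_def xsc_def using tight1[OF ctx, of k] that l1 by (simp add: xsc_def)
    show "Lij G (Sc @ flatb xsc) i j \<le> Uij G (Sc @ flatb xsc) i j" if "i < j \<and> j \<le> length xsc + 1" for i j
      unfolding Sc_def xsc_def using dnn1[OF ctx, of i j] that l1 by (simp add: xsc_def)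
  qed
  have b: "buildp G ups (S0 @ flatb xs) A 0 = Sc @ flatb xsc"
    unfolding Sc_def xsc_def Kl_def using build0[OF dec sd bnd] by simp
  have "L0 G (Sc @ flatb xsc) = L0 G (S0 @ flatb xs) + FW A t (length xs + 1)"
    unfolding Sc_def xsc_def by (rule L0_P1[OF ctx])
  moreover have "FW A t (length xs + 1) = sum_list (map (\<lambda>p. ssum t (fst p) (snd p)) A)"
    using FW_sum[OF sd bnd] .
  moreover have "length xsc = card {x\<in>{1..<length xs+1}. \<not> inW A x}" using l1 lenKK[OF ctx] by simp
  ultimately show ?thesis using g b by simp
qed


lemma main_ind:
  fixes G :: "('v,'e) tollnet" and ups :: "'v \<Rightarrow> 'v \<Rightarrow> 'e list"
  assumes disj: "tollA G \<inter> freeA G = {}"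
    and upsP: "\<And>u v Q. spath G (freeA G) u Q v \<Longrightarrow> spath G (freeA G) u (ups u v) v \<and> L0 G (ups u v) \<le> L0 G Q"
    and stp: "\<exists>Q. spath G (freeA G) (src G) Q (snk G)"
  shows "goodd G S0 xs \<Longrightarrow> length xs \<le> n \<Longrightarrow>
    Bval G (S0 @ flatb xs) \<le> alpha (length xs) * explore G ups n (S0 @ flatb xs)"
proof (induction n arbitrary: S0 xs rule: less_induct)
  case (less n S0 xs)
  have linf: "Ufree G (src G) (snk G) = ereal (Linf G)"
    using Ufree_ups[of G "src G" "snk G" ups] upsP stp by (simp add: Linf_def)
  define P where "P = S0 @ flatb xs"
  define m where "m = length xs"
  have dec: "decb G S0 xs" and tight: "\<forall>k\<le>m. Uij G P k (k+1) = ereal (L0 G (segb S0 xs k))"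
    and dnn: "\<forall>i j. i < j \<and> j \<le> m + 1 \<longrightarrow> Lij G P i j \<le> Uij G P i j"
    using less.prems unfolding goodd_def P_def m_def by auto
  have nt: "ntoll G P = m" unfolding P_def m_def using dec_ntoll[OF dec] .
  have fin: "\<And>l. l \<le> ntoll G P \<Longrightarrow> Uij G P l (l+1) \<noteq> \<infinity>" using tight nt by simp
  have dnn': "\<And>i j. i < j \<Longrightarrow> j \<le> ntoll G P + 1 \<Longrightarrow> Lij G P i j \<le> Uij G P i j" using dnn nt by simp
  have U0: "Uij G P 0 (m+1) = ereal (Linf G)" using U0_eq[of G P] nt linf by simp
  have u0: "Uij G P 0 (ntoll G P + 1) \<noteq> \<infinity>" using U0 nt by simp
  define t where "t = fst (maxrev G P)"
  define pr where "pr = snd (maxrev G P)"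
  have inv: "mrinv G P (m + 1) t pr"
    using maxrev_inv[OF fin dnn' u0] nt unfolding t_def pr_def by simp
  have inv': "mrinv G P (ntoll G P + 1) t pr" using inv nt by simp
  have tnn: "\<forall>l. 0 \<le> t l" using inv unfolding mrinv_def by auto
  have Cn: "\<forall>i j. i < j \<and> j \<le> m + 1 \<longrightarrow> ereal (ssum t i j) \<le> Dd G P i j"
    using inv unfolding mrinv_def by auto
  have VPe: "VP G P = (\<Sum>k\<in>{1..m}. t k)" unfolding VP_def t_def nt ..
  have VPnn: "0 \<le> VP G P" unfolding VPe using tnn by (simp add: sum_nonneg)
  have L0P: "L0 G P = Ep G S0 xs (m+1)" unfolding P_def m_def using Ep_L0[OF dec] .
  have Lm: "Lij G P 0 (m+1) = ereal (L0 G P)"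
    using Lij_Ep[OF dec, of 0 "m+1"] tight L0P unfolding P_def m_def
    by (simp add: Ep_def gam_def)
  have Bv: "Bval G P = Linf G - L0 G P" by (simp add: Bval_def)
  have alnn: "0 \<le> alpha k" for k using alpha_ge1[of k] by simp
  have exv: "VP G P \<le> explore G ups n P" by (rule explore_ge_VP)
  have main: "Bval G P \<le> alpha m * explore G ups n P"
  proof (cases "VP G P < Bval G P")
    case False
    have "Bval G P \<le> VP G P" using False by simp
    also have "\<dots> \<le> alpha m * VP G P" using mult_right_mono[OF alpha_ge1[of m] VPnn] by simp
    also have "\<dots> \<le> alpha m * explore G ups n P" using exv alnn by (simp add: mult_left_mono)
    finally show ?thesis .
  next
    case True
    have m1: "1 \<le> m"
    proof (rule ccontr)
      assume "\<not> 1 \<le> m"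
      then have m0: "m = 0" by simp
      then have "VP G P = 0" unfolding VPe by simp
      moreover have "Lij G P 0 1 = Uij G P 0 1" by (simp add: Lij_def)
      then have "Bval G P = 0" using Lm U0 m0 Bv by simp
      ultimately show False using True by simp
    qed
    define cs where "cs = tp_rec pr (m+1) m"
    have cs_eq: "cs = pr m # tp_rec pr m (fst (pr m))"
      unfolding cs_def using tp_T5[OF inv', of m "m+1"] m1 nt by simp
    have VPcs: "VP G P = sum_list (map (\<lambda>p. ssum t (fst p) (snd p)) cs)"
      unfolding VPe cs_def using tp_T1[OF inv', of m "m+1"] nt by simp
    have T3: "fst p + 1 < snd p \<and> snd p \<le> m + 1 \<and> ereal (ssum t (fst p) (snd p)) = Dd G P (fst p) (snd p)"
      if "p \<in> set cs" for p
    proof -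
      have "m \<le> ntoll G P" using nt by simp
      from tp_T3[OF inv' this that[unfolded cs_def]] show ?thesis by (simp only: nt)
    qed
    have a0: "fst (pr m) \<noteq> 0"
    proof
      assume a: "fst (pr m) = 0"
      have prm: "pr m \<in> set cs" using cs_eq by simp
      have "snd (pr m) = m + 1"
        using inv_prp[OF inv', of m] m1 nt unfolding prp_def by auto
      moreover have "tp_rec pr m 0 = []" using m1 by (cases m) auto
      ultimately have "ereal (VP G P) = Dd G P 0 (m+1)"
        using VPcs cs_eq a T3[OF prm] by simp
      also have "\<dots> = ereal (Bval G P)" unfolding Dd_def U0 Lm Bv by simp
      finally show False using True by simp
    qed
    have m2: "2 \<le> m" using a0 inv_fst_less[OF inv', of m] m1 nt by simp
    have lcs: "2 \<le> length cs"
    proof -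
      obtain m' where "m = Suc m'" using m1 by (cases m) auto
      then show ?thesis using cs_eq a0 by simp
    qed
    obtain n' where n': "n = Suc n'" using less.prems m1 m_def by (cases n) auto
    define ps where "ps = rev cs"
    have ps_eq: "tp_pairs G P = ps" unfolding ps_def cs_def tp_pairs_def pr_def nt ..
    have setps: "set ps = set cs" unfolding ps_def by simp
    have altps: "altI ps" unfolding ps_def cs_def by (rule altR_rev[OF tp_T4[OF inv']]) (simp add: nt)
    have sumps: "sum_list (map (\<lambda>p. ssum t (fst p) (snd p)) ps) = VP G P"
      unfolding ps_def VPcs by (simp add: rev_map[symmetric] sum_list_rev)
    have childA: "\<exists>Sc xsc. goodd G Sc xsc \<and> buildp G ups P A 0 = Sc @ flatb xsc
        \<and> L0 G (Sc @ flatb xsc) = L0 G P + sum_list (map (\<lambda>p. ssum t (fst p) (snd p)) A)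
        \<and> length xsc = card {x\<in>{1..<m+1}. \<not> inW A x}"
      if A: "sdl A" "set A \<subseteq> set ps" for A
    proof -
      have Aprops: "\<And>p. p \<in> set A \<Longrightarrow> fst p + 1 < snd p \<and> snd p \<le> m + 1 \<and> ereal (ssum t (fst p) (snd p)) = Dd G P (fst p) (snd p)"
        using T3 A setps by blast
      have sd: "sdl2 A" using sdl_sdl2[OF A(1)] Aprops by force
      have bnd: "\<forall>p\<in>set A. snd p \<le> length xs + 1" using Aprops m_def by auto
      have Dp: "\<forall>p\<in>set A. ereal (ssum t (fst p) (snd p)) = Dd G (S0 @ flatb xs) (fst p) (snd p)"
        using Aprops P_def by auto
      have pth: "\<forall>p\<in>set A. \<exists>Q. spath G (freeA G) (TERMv G (S0 @ flatb xs) (fst p)) Q (INITv G (S0 @ flatb xs) (snd p))"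
      proof
        fix p assume p: "p \<in> set A"
        have "snd p \<le> m + 1" using Aprops[OF p] by simp
        then have "Lij G P (fst p) (snd p) = ereal (Lr G P (fst p) (snd p))"
          using Lij_Lr[OF fin] nt by simp
        then have "Uij G P (fst p) (snd p) \<noteq> \<infinity>"
          using Aprops[OF p] unfolding Dd_def by (cases "Uij G P (fst p) (snd p)") auto
        then have "Ufree G (TERMv G (S0 @ flatb xs) (fst p)) (INITv G (S0 @ flatb xs) (snd p)) \<noteq> \<infinity>"
          unfolding Uij_def P_def .
        then show "\<exists>Q. spath G (freeA G) (TERMv G (S0 @ flatb xs) (fst p)) Q (INITv G (S0 @ flatb xs) (snd p))"
          by (rule Ufree_ex)
      qed
      have Cn': "\<forall>i j. i < j \<and> j \<le> length xs + 1 \<longrightarrow> ereal (ssum t i j) \<le> Dd G (S0 @ flatb xs) i j"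
        using Cn P_def m_def by simp
      have tight': "\<forall>k\<le>length xs. Uij G (S0 @ flatb xs) k (k+1) = ereal (L0 G (segb S0 xs k))"
        using tight P_def m_def by simp
      show ?thesis using child[OF dec disj upsP sd bnd pth Dp Cn' tnn tight'] P_def m_def by blast
    qed
    define A1 where "A1 = nths ps {n. even n}"
    define A2 where "A2 = nths ps {n. odd n}"
    have sdA: "sdl A1" "sdl A2" using altI_nths[OF altps] unfolding A1_def A2_def by auto
    have subA: "set A1 \<subseteq> set ps" "set A2 \<subseteq> set ps" unfolding A1_def A2_def by (auto simp: set_nths_subset)
    obtain Sa xsa where ga: "goodd G Sa xsa" and ba: "buildp G ups P A1 0 = Sa @ flatb xsa"
      and la: "L0 G (Sa @ flatb xsa) = L0 G P + sum_list (map (\<lambda>p. ssum t (fst p) (snd p)) A1)"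
      and ca: "length xsa = card {x\<in>{1..<m+1}. \<not> inW A1 x}"
      using childA[OF sdA(1) subA(1)] by blast
    obtain Sb xsb where gb: "goodd G Sb xsb" and bb: "buildp G ups P A2 0 = Sb @ flatb xsb"
      and lb: "L0 G (Sb @ flatb xsb) = L0 G P + sum_list (map (\<lambda>p. ssum t (fst p) (snd p)) A2)"
      and cb: "length xsb = card {x\<in>{1..<m+1}. \<not> inW A2 x}"
      using childA[OF sdA(2) subA(2)] by blast
    have p1: "P1 G ups P = Sa @ flatb xsa" unfolding P1_def ps_eq A1_def[symmetric] using ba .
    have p2: "P2 G ups P = Sb @ flatb xsb" unfolding P2_def ps_eq A2_def[symmetric] using bb .
    let ?Ka = "{x\<in>{1..<m+1}. \<not> inW A1 x}" and ?Kb = "{x\<in>{1..<m+1}. \<not> inW A2 x}"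
    have ps_ne: "ps \<noteq> []" using lcs ps_def by auto
    have lt_a: "length xsa < m"
    proof -
      have "A1 \<noteq> []" unfolding A1_def using nths_even_nonempty[OF ps_ne] .
      then obtain p where p: "p \<in> set A1" by (cases A1) auto
      then have "fst p + 1 < snd p" "snd p \<le> m + 1" using T3 subA setps by blast+
      then have "fst p + 1 \<in> {1..<m+1}" "inW A1 (fst p + 1)" using p by (auto simp: inW_def)
      then have "?Ka \<subset> {1..<m+1}" by blast
      then have "card ?Ka < card {1..<m+1}" by (intro psubset_card_mono) auto
      then show ?thesis using ca by simp
    qed
    have lt_b: "length xsb < m"
    proof -
      have "length ps \<ge> 2" using lcs ps_def by simp
      then have "A2 \<noteq> []" unfolding A2_def using nths_odd_nonempty by blast
      then obtain p where p: "p \<in> set A2" by (cases A2) auto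
      then have "fst p + 1 < snd p" "snd p \<le> m + 1" using T3 subA setps by blast+
      then have "fst p + 1 \<in> {1..<m+1}" "inW A2 (fst p + 1)" using p by (auto simp: inW_def)
      then have "?Kb \<subset> {1..<m+1}" by blast
      then have "card ?Kb < card {1..<m+1}" by (intro psubset_card_mono) auto
      then show ?thesis using cb by simp
    qed
    have sum_ab: "length xsa + length xsb \<le> m"
    proof -
      have disjK: "?Ka \<inter> ?Kb = {}"
      proof (rule ccontr)
        assume "?Ka \<inter> ?Kb \<noteq> {}"
        then obtain x where x0: "x \<in> ?Ka \<inter> ?Kb" by blast
        then have x: "1 \<le> x" "x \<le> m" "\<not> inW A1 x" "\<not> inW A2 x" by auto
        have mle: "m \<le> ntoll G P" "m < m + 1" using nt by auto
        have "\<exists>p\<in>set cs. fst p < x \<and> x < snd p"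
          using tp_T2[OF inv' mle x(1) x(2)] unfolding cs_def .
        then obtain p where "p \<in> set cs" "fst p < x \<and> x < snd p" by blast
        then have "p \<in> set A1 \<or> p \<in> set A2"
          using set_nths_split[of ps] setps unfolding A1_def A2_def by auto
        then show False using x \<open>fst p < x \<and> x < snd p\<close> unfolding inW_def by blast
      qed
      have "card ?Ka + card ?Kb = card (?Ka \<union> ?Kb)" using disjK by (intro card_Un_disjoint[symmetric]) auto
      also have "\<dots> \<le> card {1..<m+1}" by (intro card_mono) auto
      finally show ?thesis using ca cb by simp
    qed
    have Ba: "Bval G (Sa @ flatb xsa) = Bval G P - sum_list (map (\<lambda>p. ssum t (fst p) (snd p)) A1)"
      using la by (simp add: Bval_def)
    have Bb: "Bval G (Sb @ flatb xsb) = Bval G P - sum_list (map (\<lambda>p. ssum t (fst p) (snd p)) A2)"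
      using lb by (simp add: Bval_def)
    have sumsplit: "sum_list (map (\<lambda>p. ssum t (fst p) (snd p)) A1) + sum_list (map (\<lambda>p. ssum t (fst p) (snd p)) A2) = VP G P"
      using sum_nths_split[of "\<lambda>p. ssum t (fst p) (snd p)" ps] sumps unfolding A1_def A2_def by simp
    have two: "2 * Bval G P = VP G P + Bval G (Sa @ flatb xsa) + Bval G (Sb @ flatb xsb)"
      using Ba Bb sumsplit by simp
    have IHa: "Bval G (Sa @ flatb xsa) \<le> alpha (length xsa) * explore G ups n' (Sa @ flatb xsa)"
      using less.IH[of n' Sa xsa] n' ga lt_a less.prems m_def by simp
    have IHb: "Bval G (Sb @ flatb xsb) \<le> alpha (length xsb) * explore G ups n' (Sb @ flatb xsb)"
      using less.IH[of n' Sb xsb] n' gb lt_b less.prems m_def by simp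
    define M where "M = max (VP G P) (max (explore G ups n' (Sa @ flatb xsa)) (explore G ups n' (Sb @ flatb xsb)))"
    have ex: "explore G ups n P = M" unfolding M_def n' using True p1 p2 by simp
    have Mnn: "0 \<le> M" unfolding M_def using VPnn by simp
    have "2 * Bval G P \<le> M + alpha (length xsa) * M + alpha (length xsb) * M"
    proof -
      have "VP G P \<le> M" unfolding M_def by simp
      moreover have "alpha (length xsa) * explore G ups n' (Sa @ flatb xsa) \<le> alpha (length xsa) * M"
        unfolding M_def using alnn by (intro mult_left_mono) auto
      moreover have "alpha (length xsb) * explore G ups n' (Sb @ flatb xsb) \<le> alpha (length xsb) * M"
        unfolding M_def using alnn by (intro mult_left_mono) auto
      ultimately show ?thesis using two IHa IHb by linarith
    qed
    also have "\<dots> = (1 + alpha (length xsa) + alpha (length xsb)) * M" by (simp add: algebra_simps)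
    also have "\<dots> \<le> (2 * alpha m) * M"
      using alpha_comb[OF m2 lt_a lt_b sum_ab] Mnn by (intro mult_right_mono) auto
    finally have "Bval G P \<le> alpha m * M" by simp
    then show ?thesis using ex by simp
  qed
  then show ?case using P_def m_def by simp
qed


lemma walk_append: "walk G u (A @ B) v \<longleftrightarrow> (\<exists>w. walk G u A w \<and> walk G w B v)"
  by (induction A arbitrary: u) auto

lemma walk_snoc_end: "walk G u (A @ [e]) w \<Longrightarrow> w = arc_head G e"
  by (induction A arbitrary: u) auto

lemma walk_Cons_start: "walk G u (e # B) v \<Longrightarrow> u = arc_tail G e"
  by simp

lemma walk_mem: "walk G u A w \<Longrightarrow> w \<in> set (u # map (arc_head G) A)"
  by (induction A arbitrary: u) auto

lemma walk_take_drop: "walk G u W v \<Longrightarrow> k \<le> length W \<Longrightarrow>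
  walk G u (take k W) ((u # map (arc_head G) W) ! k) \<and> walk G ((u # map (arc_head G) W) ! k) (drop k W) v"
proof (induction W arbitrary: u k)
  case Nil then show ?case by simp
next
  case (Cons e W)
  show ?case
  proof (cases k)
    case 0 then show ?thesis using Cons by simp
  next
    case (Suc k')
    then show ?thesis using Cons.IH[of "arc_head G e" k'] Cons.prems by simp
  qed
qed

lemma L0_take_drop: "L0 G W = L0 G (take k W) + L0 G (drop k W)"
  by (metis L0_append append_take_drop_id)

lemma shorten: "walk G u W v \<Longrightarrow> set W \<subseteq> S \<Longrightarrow> \<exists>Q. spath G S u Q v \<and> L0 G Q \<le> L0 G W"
proof (induction "length W" arbitrary: W rule: less_induct)
  case less
  let ?vs = "u # map (arc_head G) W"
  show ?case
  proof (cases "distinct ?vs")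
    case True
    then show ?thesis using less.prems by (intro exI[of _ W]) (auto simp: spath_def)
  next
    case False
    then obtain i j where ij: "i < length ?vs" "j < length ?vs" "i \<noteq> j" "?vs ! i = ?vs ! j"
      by (auto simp: distinct_conv_nth)
    have "\<exists>i j. i < j \<and> j \<le> length W \<and> ?vs ! i = ?vs ! j"
    proof (cases "i < j")
      case True then show ?thesis using ij by (intro exI[of _ i] exI[of _ j]) auto
    next
      case False then show ?thesis using ij by (intro exI[of _ j] exI[of _ i]) auto
    qed
    then obtain i j where ij: "i < j" "j \<le> length W" "?vs ! i = ?vs ! j" by blast
    define W' where "W' = take i W @ drop j W"
    have w1: "walk G u (take i W) (?vs ! i)" using walk_take_drop[OF less.prems(1), of i] ij by simp
    have w2: "walk G (?vs ! j) (drop j W) v" using walk_take_drop[OF less.prems(1), of j] ij by simp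
    have wW: "walk G u W' v" unfolding W'_def walk_append using w1 w2 ij by auto
    have len: "length W' < length W" unfolding W'_def using ij by simp
    have sW: "set W' \<subseteq> S" unfolding W'_def using less.prems(2) set_take_subset[of i W] set_drop_subset[of j W] by auto
    have "L0 G W' \<le> L0 G W"
    proof -
      have "L0 G W = L0 G (take i W) + L0 G (drop i W)" by (rule L0_take_drop)
      moreover have "L0 G (drop i W) = L0 G (take (j - i) (drop i W)) + L0 G (drop (j - i) (drop i W))"
        by (rule L0_take_drop)
      moreover have "drop (j - i) (drop i W) = drop j W" using ij by simp
      moreover have "0 \<le> L0 G (take (j - i) (drop i W))" by (rule L0_nonneg)
      ultimately show ?thesis unfolding W'_def L0_append by simp
    qed
    then show ?thesis using less.hyps[OF len wW sW] by fastforce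
  qed
qed

lemma exists_dec: "\<exists>S0 xs. decb G S0 xs \<and> P = S0 @ flatb xs"
proof (induction P rule: rev_induct)
  case Nil then show ?case by (intro exI[of _ "[]"]) (simp add: decb_def freel_def)
next
  case (snoc e P)
  then obtain S0 xs where d: "decb G S0 xs" "P = S0 @ flatb xs" by blast
  show ?case
  proof (cases "e \<in> tollA G")
    case True
    then show ?thesis using d by (intro exI[of _ S0] exI[of _ "xs @ [(e, [])]"]) (auto simp: decb_def freel_def)
  next
    case False
    show ?thesis
    proof (cases "xs = []")
      case True
      then show ?thesis using d False by (intro exI[of _ "S0 @ [e]"] exI[of _ "[]"]) (auto simp: decb_def freel_def)
    next
      case xne: False
      define xs' where "xs' = butlast xs @ [(fst (last xs), snd (last xs) @ [e])]"
      have "xs = butlast xs @ [last xs]" using xne by simp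
      then have "flatb xs = flatb (butlast xs) @ fst (last xs) # snd (last xs)"
        by (metis flatb_simps append_Nil2)
      then have "flatb xs' = flatb xs @ [e]" unfolding xs'_def by simp
      moreover have "decb G S0 xs'"
        unfolding decb_def
      proof (intro conjI ballI)
        show "freel G S0" using d unfolding decb_def by simp
        fix p assume "p \<in> set xs'"
        then have "p \<in> set (butlast xs) \<or> p = (fst (last xs), snd (last xs) @ [e])" unfolding xs'_def by auto
        moreover have lx: "fst (last xs) \<in> tollA G \<and> set (snd (last xs)) \<inter> tollA G = {}"
          using d xne unfolding decb_def freel_def by simp
        moreover have "\<forall>q\<in>set (butlast xs). fst q \<in> tollA G \<and> set (snd q) \<inter> tollA G = {}"
          using d unfolding decb_def freel_def by (auto dest: in_set_butlastD)
        ultimately show "fst p \<in> tollA G" "freel G (snd p)"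
          using False unfolding freel_def by auto
      qed
      ultimately show ?thesis using d by (intro exI[of _ S0] exI[of _ xs']) simp
    qed
  qed
qed


definition preb :: "'e list \<Rightarrow> ('e \<times> 'e list) list \<Rightarrow> nat \<Rightarrow> 'e list" where
  "preb S0 xs i = (if i = 0 then [] else S0 @ flatb (take (i-1) xs) @ [fst (xs!(i-1))])"

definition pieceb :: "'e list \<Rightarrow> ('e \<times> 'e list) list \<Rightarrow> nat \<Rightarrow> nat \<Rightarrow> 'e list" where
  "pieceb S0 xs i j = segb S0 xs i @ flatb (take (j-i-1) (drop i xs))"

definition sufb :: "('e \<times> 'e list) list \<Rightarrow> nat \<Rightarrow> 'e list" where
  "sufb xs j = flatb (drop (j-1) xs)"

lemma decomp3: "i < j \<Longrightarrow> j \<le> length xs + 1 \<Longrightarrow> S0 @ flatb xs = preb S0 xs i @ pieceb S0 xs i j @ sufb xs j"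
proof (cases "i = 0")
  case True
  assume ij: "i < j" "j \<le> length xs + 1"
  have "flatb xs = flatb (take (j-1) xs) @ flatb (drop (j-1) xs)" by (rule flatb_take_drop)
  then show ?thesis using True by (simp add: preb_def pieceb_def sufb_def segb_def)
next
  case False
  assume ij: "i < j" "j \<le> length xs + 1"
  have f1: "flatb xs = flatb (take (i-1) xs) @ flatb (drop (i-1) xs)" by (rule flatb_take_drop)
  have f2: "flatb (drop (i-1) xs) = fst (xs!(i-1)) # snd (xs!(i-1)) @ flatb (drop i xs)"
    using flatb_drop_nth[of "i-1" xs] ij False by simp
  have f3: "flatb (drop i xs) = flatb (take (j-i-1) (drop i xs)) @ flatb (drop (j-1) xs)"
    using flatb_take_drop[of "drop i xs" "j-i-1"] ij by simp
  show ?thesis using False unfolding preb_def pieceb_def sufb_def segb_def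
    by (simp only: f1 f2 f3 if_False) simp
qed

lemma L0_prefix: "decb G S0 xs \<Longrightarrow> k \<le> length xs \<Longrightarrow> L0 G (S0 @ flatb (take k xs)) = Ep G S0 xs (k+1)"
proof -
  assume d: "decb G S0 xs" "k \<le> length xs"
  have "decb G S0 (take k xs)" using d unfolding decb_def by (auto dest: in_set_takeD)
  then have "L0 G (S0 @ flatb (take k xs)) = Ep G S0 (take k xs) (length (take k xs) + 1)" by (rule Ep_L0)
  also have "\<dots> = Ep G S0 xs (k+1)" unfolding Ep_def using d
    by (intro sum.cong) (auto simp: segb_def gam_def min_def)
  finally show ?thesis .
qed

context
  fixes G :: "('v,'e) tollnet" and S0 :: "'e list" and xs :: "('e \<times> 'e list) list"
  assumes dec: "decb G S0 xs"
begin

lemma L0_pre: "i \<le> length xs \<Longrightarrow> L0 G (preb S0 xs i) = Ep G S0 xs i + gam G xs i"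
proof (cases "i = 0")
  case True then show ?thesis by (simp add: preb_def Ep_def gam_def L0_def plen_def)
next
  case False
  assume i: "i \<le> length xs"
  have "fst (xs!(i-1)) \<in> tollA G" using dec i False unfolding decb_def by auto
  then show ?thesis using False L0_prefix[OF dec, of "i-1"] i
    by (simp add: preb_def L0_append L0_Cons L0_toll gam_def L0_def[of G "[]"] plen_def)
qed

lemma L0_suf: "1 \<le> j \<Longrightarrow> j \<le> length xs + 1 \<Longrightarrow> L0 G (sufb xs j) = Ep G S0 xs (length xs + 1) - Ep G S0 xs j"
proof -
  assume j: "1 \<le> j" "j \<le> length xs + 1"
  have "L0 G (S0 @ flatb xs) = L0 G (S0 @ flatb (take (j-1) xs)) + L0 G (sufb xs j)"
    using flatb_take_drop[of xs "j-1"] unfolding sufb_def by (simp add: L0_append)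
  then show ?thesis using Ep_L0[OF dec] L0_prefix[OF dec, of "j-1"] j by simp
qed

lemma L0_piece: "i < j \<Longrightarrow> j \<le> length xs + 1 \<Longrightarrow> L0 G (pieceb S0 xs i j) = Ep G S0 xs j - Ep G S0 xs i - gam G xs i"
proof -
  assume ij: "i < j" "j \<le> length xs + 1"
  have "L0 G (S0 @ flatb xs) = L0 G (preb S0 xs i) + L0 G (pieceb S0 xs i j) + L0 G (sufb xs j)"
    using decomp3[OF ij, of S0] by (simp add: L0_append)
  then show ?thesis using Ep_L0[OF dec] L0_pre[of i] L0_suf[of j] ij by simp
qed

lemma pre_walk: "walk G (src G) (preb S0 xs i @ B) v \<Longrightarrow> i \<le> length xs \<Longrightarrow>
   walk G (TERMv G (S0 @ flatb xs) i) B v"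
proof -
  assume w: "walk G (src G) (preb S0 xs i @ B) v" and i: "i \<le> length xs"
  obtain w where w1: "walk G (src G) (preb S0 xs i) w" "walk G w B v" using w walk_append by metis
  have "w = TERMv G (S0 @ flatb xs) i"
  proof (cases "i = 0")
    case True then show ?thesis using w1 by (simp add: preb_def TERMv_def)
  next
    case False
    have "w = arc_head G (fst (xs!(i-1)))"
      using w1(1) False walk_snoc_end[of G "src G" "S0 @ flatb (take (i-1) xs)"] by (simp add: preb_def)
    then show ?thesis using False dec_tau[OF dec, of i] i by (simp add: TERMv_def)
  qed
  then show ?thesis using w1 by simp
qed

lemma suf_start: "walk G u (sufb xs j) v \<Longrightarrow> 1 \<le> j \<Longrightarrow> j \<le> length xs + 1 \<Longrightarrow> v = snk G \<Longrightarrow>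
   u = INITv G (S0 @ flatb xs) j"
proof -
  assume w: "walk G u (sufb xs j) v" and j: "1 \<le> j" "j \<le> length xs + 1" and v: "v = snk G"
  show ?thesis
  proof (cases "j = length xs + 1")
    case True
    then have "sufb xs j = []" by (simp add: sufb_def)
    then show ?thesis using w v True dec_ntoll[OF dec] by (simp add: INITv_def)
  next
    case False
    then have "sufb xs j = fst (xs!(j-1)) # snd (xs!(j-1)) @ flatb (drop j xs)"
      using flatb_drop_nth[of "j-1" xs] j by (simp add: sufb_def)
    then have "u = arc_tail G (fst (xs!(j-1)))" using w by simp
    then show ?thesis using False dec_tau[OF dec, of j] j dec_ntoll[OF dec] by (simp add: INITv_def)
  qed
qed

end


lemma pre_end: "decb G S0 xs \<Longrightarrow> walk G (src G) (preb S0 xs i) w \<Longrightarrow> i \<le> length xs \<Longrightarrow> w = TERMv G (S0 @ flatb xs) i"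
proof (cases "i = 0")
  case True
  assume "walk G (src G) (preb S0 xs i) w"
  then show ?thesis using True by (simp add: preb_def TERMv_def)
next
  case False
  assume d: "decb G S0 xs" and w1: "walk G (src G) (preb S0 xs i) w" and i: "i \<le> length xs"
  have "w = arc_head G (fst (xs!(i-1)))"
    using w1 False walk_snoc_end[of G "src G" "S0 @ flatb (take (i-1) xs)"] by (simp add: preb_def)
  then show ?thesis using False dec_tau[OF d, of i] i by (simp add: TERMv_def)
qed

lemma distinct_mid: "distinct (u # map f (A @ B @ C)) \<Longrightarrow> w \<in> set (u # map f A) \<Longrightarrow> distinct (w # map f B)"
  by auto

lemma P0_good:
  fixes G :: "('v,'e) tollnet" and S0 :: "'e list" and xs :: "('e \<times> 'e list) list"
  assumes dec: "decb G S0 xs" and disj: "tollA G \<inter> freeA G = {}"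
    and sp: "spath G (allA G) (src G) (S0 @ flatb xs) (snk G)"
    and short: "\<And>Q. spath G (allA G) (src G) Q (snk G) \<Longrightarrow> L0 G (S0 @ flatb xs) \<le> L0 G Q"
  shows "goodd G S0 xs"
proof -
  let ?P = "S0 @ flatb xs"
  let ?m = "length xs"
  have wP: "walk G (src G) ?P (snk G)" and dP: "distinct (src G # map (arc_head G) ?P)" and sP: "set ?P \<subseteq> allA G"
    using sp unfolding spath_def by auto
  have walks: "walk G (src G) (preb S0 xs i) (TERMv G ?P i) \<and> walk G (TERMv G ?P i) (pieceb S0 xs i j) (INITv G ?P j)
      \<and> walk G (INITv G ?P j) (sufb xs j) (snk G)" if ij: "i < j" "j \<le> ?m + 1" for i j
  proof -
    have e: "?P = preb S0 xs i @ pieceb S0 xs i j @ sufb xs j" using decomp3[OF ij] .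
    obtain w1 where w1: "walk G (src G) (preb S0 xs i) w1" "walk G w1 (pieceb S0 xs i j @ sufb xs j) (snk G)"
      using wP e walk_append by metis
    have w1e: "w1 = TERMv G ?P i" using pre_end[OF dec w1(1)] ij by simp
    obtain w2 where w2: "walk G w1 (pieceb S0 xs i j) w2" "walk G w2 (sufb xs j) (snk G)"
      using w1(2) walk_append by metis
    have w2e: "w2 = INITv G ?P j" using suf_start[OF dec w2(2)] ij by simp
    show ?thesis using w1 w2 w1e w2e by simp
  qed
  have repl: "ereal (L0 G (pieceb S0 xs i j)) \<le> Uij G ?P i j" if ij: "i < j" "j \<le> ?m + 1" for i j
    unfolding Uij_def Ufree_def
  proof (rule Inf_greatest)
    fix x assume "x \<in> ereal ` {L0 G Q |Q. spath G (freeA G) (TERMv G ?P i) Q (INITv G ?P j)}"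
    then obtain R where x: "x = ereal (L0 G R)" and R: "spath G (freeA G) (TERMv G ?P i) R (INITv G ?P j)" by auto
    have e: "?P = preb S0 xs i @ pieceb S0 xs i j @ sufb xs j" using decomp3[OF ij] .
    have wW: "walk G (src G) (preb S0 xs i @ R @ sufb xs j) (snk G)"
      using walks[OF ij] R unfolding walk_append spath_def by blast
    have "set (preb S0 xs i @ R @ sufb xs j) \<subseteq> allA G"
      using sP e R unfolding spath_def allA_def by auto
    then obtain Q where Q: "spath G (allA G) (src G) Q (snk G)" "L0 G Q \<le> L0 G (preb S0 xs i @ R @ sufb xs j)"
      using shorten[OF wW] by blast
    have "L0 G ?P \<le> L0 G Q" using short[OF Q(1)] .
    then have "L0 G (pieceb S0 xs i j) \<le> L0 G R" using Q(2) e by (simp add: L0_append)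
    then show "ereal (L0 G (pieceb S0 xs i j)) \<le> x" using x by simp
  qed
  have tight: "\<forall>k\<le>?m. Uij G ?P k (k+1) = ereal (L0 G (segb S0 xs k))"
  proof (intro allI impI)
    fix k assume k: "k \<le> ?m"
    have ij: "k < k + 1" "k + 1 \<le> ?m + 1" using k by auto
    have pc: "pieceb S0 xs k (k+1) = segb S0 xs k" by (simp add: pieceb_def)
    have e: "?P = preb S0 xs k @ segb S0 xs k @ sufb xs (k+1)" using decomp3[OF ij] pc by simp
    have "spath G (freeA G) (TERMv G ?P k) (segb S0 xs k) (INITv G ?P (k+1))"
      unfolding spath_def
    proof (intro conjI)
      show "walk G (TERMv G ?P k) (segb S0 xs k) (INITv G ?P (k + 1))" using walks[OF ij] pc by simp
      have "TERMv G ?P k \<in> set (src G # map (arc_head G) (preb S0 xs k))"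
        using walk_mem[of G "src G" "preb S0 xs k" "TERMv G ?P k"] walks[OF ij] by blast
      then show "distinct (TERMv G ?P k # map (arc_head G) (segb S0 xs k))"
        using dP e distinct_mid by metis
      have fr: "freel G (segb S0 xs k)" using dec k unfolding decb_def segb_def by (cases k) auto
      have "set (segb S0 xs k) \<subseteq> allA G" using sP e by auto
      then show "set (segb S0 xs k) \<subseteq> freeA G" using fr unfolding freel_def allA_def by auto
    qed
    then have "Uij G ?P k (k+1) \<le> ereal (L0 G (segb S0 xs k))"
      unfolding Uij_def Ufree_def by (intro Inf_lower) auto
    moreover have "ereal (L0 G (segb S0 xs k)) \<le> Uij G ?P k (k+1)" using repl[OF ij] pc by simp
    ultimately show "Uij G ?P k (k+1) = ereal (L0 G (segb S0 xs k))" by simp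
  qed
  have dnn: "\<forall>i j. i < j \<and> j \<le> ?m + 1 \<longrightarrow> Lij G ?P i j \<le> Uij G ?P i j"
  proof (intro allI impI)
    fix i j assume ij: "i < j \<and> j \<le> ?m + 1"
    have "Lij G ?P i j = ereal (L0 G (pieceb S0 xs i j))"
      using Lij_Ep[OF dec tight, of i j] L0_piece[OF dec, of i j] ij by simp
    then show "Lij G ?P i j \<le> Uij G ?P i j" using repl ij by simp
  qed
  show ?thesis unfolding goodd_def using dec tight dnn by simp
qed


lemma spath_mono: "spath G S u P v \<Longrightarrow> S \<subseteq> S' \<Longrightarrow> spath G S' u P v"
  unfolding spath_def by auto

lemma plen_split: "plen G T P = L0 G P + revenue G T P"
proof -
  have "arc_cost G T e = arc_cost G (\<lambda>_. 0) e + (if e \<in> tollA G then T e else 0)" for e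
    by (simp add: arc_cost_def)
  then show ?thesis unfolding plen_def L0_def revenue_def
    by (induction P) (simp_all add: plen_def)
qed

lemma revenue_free: "set Q \<inter> tollA G = {} \<Longrightarrow> revenue G T Q = 0"
  unfolding revenue_def by (induction Q) auto

lemma ntoll_le_card:
  assumes fin: "finite (tollA G)" and d: "distinct P"
  shows "ntoll G P \<le> card (tollA G)"
proof -
  have "ntoll G P = length (filter (\<lambda>n. P ! n \<in> tollA G) [0..<length P])" by (simp add: ntoll_def tpos_def)
  also have "\<dots> = length (filter (\<lambda>e. e \<in> tollA G) (map (\<lambda>n. P ! n) [0..<length P]))"
    by (simp add: filter_map o_def)
  also have "map (\<lambda>n. P ! n) [0..<length P] = P" by (rule map_nth)
  also have "length (filter (\<lambda>e. e \<in> tollA G) P) = card (set (filter (\<lambda>e. e \<in> tollA G) P))"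
    using distinct_card[OF distinct_filter[OF d]] by simp
  also have "\<dots> \<le> card (tollA G)" using fin by (intro card_mono) auto
  finally show ?thesis .
qed

theorem corollary2:
  fixes G :: "('v, 'e) tollnet" and ups :: "'v \<Rightarrow> 'v \<Rightarrow> 'e list" and P0 :: "'e list"
  assumes inst: "maxtoll_instance G"
    and ups: "\<And>u v Q. spath G (freeA G) u Q v \<Longrightarrow>
                 spath G (freeA G) u (ups u v) v \<and> L0 G (ups u v) \<le> L0 G Q"
    and P0: "shortest_stpath G (\<lambda>_. 0) (allA G) P0"
    and m: "ntoll G P0 \<ge> 1"
  shows "explore G ups (ntoll G P0 + 1) P0 \<ge> (Linf G - L0 G P0) / alpha (ntoll G P0)
       \<and> (Linf G - L0 G P0) / alpha (ntoll G P0) \<ge> OPT G / alpha (card (tollA G))"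
proof -
  have fin: "finite (tollA G)" and disj: "tollA G \<inter> freeA G = {}"
    and stp: "\<exists>Q. spath G (freeA G) (src G) Q (snk G)"
    using inst unfolding maxtoll_instance_def by auto
  have sp: "spath G (allA G) (src G) P0 (snk G)"
    and short: "\<And>Q. spath G (allA G) (src G) Q (snk G) \<Longrightarrow> L0 G P0 \<le> L0 G Q"
    using P0 unfolding shortest_stpath_def L0_def by auto
  obtain S0 xs where dec: "decb G S0 xs" and P0e: "P0 = S0 @ flatb xs" using exists_dec by blast
  have good: "goodd G S0 xs" using P0_good[OF dec disj] sp short P0e by simp
  have nt: "ntoll G P0 = length xs" using dec_ntoll[OF dec] P0e by simp
  have ind: "Bval G P0 \<le> alpha (ntoll G P0) * explore G ups (ntoll G P0 + 1) P0"
    using main_ind[OF disj ups stp good, of "length xs + 1"] P0e nt by simp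
  have apos: "0 < alpha k" for k using alpha_ge1[of k] by simp
  have part1: "(Linf G - L0 G P0) / alpha (ntoll G P0) \<le> explore G ups (ntoll G P0 + 1) P0"
    using ind apos[of "ntoll G P0"] by (simp add: Bval_def pos_divide_le_eq mult.commute)
  define Q0 where "Q0 = ups (src G) (snk G)"
  obtain Qs where Qs: "spath G (freeA G) (src G) Qs (snk G)" using stp by blast
  have Q0: "spath G (freeA G) (src G) Q0 (snk G)" using ups[OF Qs] unfolding Q0_def by simp
  have linf: "Linf G = L0 G Q0"
    using Ufree_ups[of G "src G" "snk G" ups] ups stp unfolding Linf_def Q0_def by simp
  have Q0all: "spath G (allA G) (src G) Q0 (snk G)" using spath_mono[OF Q0] by (auto simp: allA_def)
  have Q0free: "set Q0 \<inter> tollA G = {}" using Q0 disj unfolding spath_def by auto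
  have Bnn: "0 \<le> Linf G - L0 G P0" using short[OF Q0all] linf by simp
  have opt: "OPT G \<le> Linf G - L0 G P0"
    unfolding OPT_def
  proof (rule cSup_least)
    have "revenue G (\<lambda>_. 0) P0 \<in> {revenue G T P |T P. (\<forall>e\<in>tollA G. 0 \<le> T e) \<and> shortest_stpath G T (allA G) P}"
      by (rule CollectI, rule exI[of _ "\<lambda>_. 0"], rule exI[of _ P0]) (simp add: P0)
    then show "{revenue G T P |T P. (\<forall>e\<in>tollA G. 0 \<le> T e) \<and> shortest_stpath G T (allA G) P} \<noteq> {}"
      by blast
    fix x assume "x \<in> {revenue G T P |T P. (\<forall>e\<in>tollA G. 0 \<le> T e) \<and> shortest_stpath G T (allA G) P}"
    then obtain T P where x: "x = revenue G T P" and sh: "shortest_stpath G T (allA G) P" by blast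
    have "plen G T P \<le> plen G T Q0" using sh Q0all unfolding shortest_stpath_def by blast
    moreover have "plen G T Q0 = L0 G Q0" using plen_split[of G T Q0] revenue_free[OF Q0free] by simp
    moreover have "L0 G P0 \<le> L0 G P" using short sh unfolding shortest_stpath_def by blast
    ultimately show "x \<le> Linf G - L0 G P0" using plen_split[of G T P] x linf by simp
  qed
  have dP0: "distinct P0" using sp unfolding spath_def by (auto simp: distinct_map)
  have mc: "ntoll G P0 \<le> card (tollA G)" by (rule ntoll_le_card[OF fin dP0])
  have "OPT G / alpha (card (tollA G)) \<le> (Linf G - L0 G P0) / alpha (card (tollA G))"
    using divide_right_mono[OF opt, of "alpha (card (tollA G))"] apos[of "card (tollA G)"] by simp
  also have "\<dots> \<le> (Linf G - L0 G P0) / alpha (ntoll G P0)"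
    using Bnn apos alpha_mono[OF mc] by (intro divide_left_mono) auto
  finally show ?thesis using part1 by simp
qed


end
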